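(* Let $n_\theta\in\mathbb{N}$ and let $\kappa:\mathbb{R}^{n_\theta}\times\mathbb{R}^{n_\theta}\to\mathbb{R}$ be a kernel (as in the context) with reproducing kernel Hilbert space $\mathcal{H}$. Let a dataset $\mathcal{D}_k=\{(\widetilde\theta_i,\widetilde y_i)\mid i=1,\dots,N_k\}\subset\mathbb{R}^{n_\theta}\times\mathbb{R}$, constants $\bar\delta\ge 0$ and $\Gamma>0$, and a function $f\in\mathcal{H}$ be given such that $\lVert f\rVert\le\Gamma$ and $|f(\widetilde\theta_i)-\widetilde y_i|\le\bar\delta$ for all $i=1,\dots,N_k$. Let $m_k$ be defined by $$m_k=\arg\min_{m\in\mathcal{H}}\lVert m\rVert^2\quad\text{s.t. } |m(\widetilde\theta_i)-\widetilde y_i|\le\bar\delta\ \ \forall i\in\{1,\dots,N_k\}.$$ Define the feasible set $\mathcal{F}:=\{g\in\mathcal{H}: \lVert g\rVert^2\le\Gamma^2,\ |g(\widetilde\theta_i)-\widetilde y_i|\le\bar\delta\ \forall i=1,\dots,N_k\}$ (so $f\in\mathcal{F}$). Fix $\theta\in\mathbb{R}^{n_\theta}$. (i) With $N=N_k+n_\theta$, the infimum $\inf_{g\in\mathcal{F}}\nabla g(\theta)^\top\nabla m_k(\theta)$ is attained and equals the optimal value of the second-order cone program $$\underline b(\theta):=\min_{\beta\in\mathbb{R}^N}\ \begin{bmatrix}0_{1\times N_k} & \nabla m_k(\theta)^\top\end{bmatrix}\mathfrak{K}(\theta)\beta\quad\text{s.t.}\quad \beta^\top\mathfrak{K}(\theta)\beta\le\Gamma^2,\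 \ |\xi_i^\top\mathfrak{K}(\theta)\beta-\widetilde y_i|\le\bar\delta\ \ \forall i\in\{1,\dots,N_k\},$$ where $\xi_i\in\mathbb{R}^N$ is the $i$-th standard basis vector. In particular $\nabla f(\theta)^\top\nabla m_k(\theta)\ge\underline b(\theta)$. (ii) For any $\mu>0$ and $c\in(0,1)$, let $\theta^+:=\theta-\mu\nabla m_k(\theta)$ and $N=N_k+2+n_\theta$. Then the supremum $\sup_{g\in\mathcal{F}}\big(g(\theta^+)-g(\theta)+c\mu\nabla g(\theta)^\top\nabla m_k(\theta)\big)$ is attained and equals the optimal value of the second-order cone program $$\bar b(\theta,\mu):=\max_{\beta\in\mathbb{R}^N}\ \begin{bmatrix}0_{1\times N_k} & -1 & 1 & c\mu\nabla m_k(\theta)^\top\end{bmatrix}\mathfrak{K}'(\theta,\theta^+)\beta\quad\text{s.t.}\quad\beta^\top\mathfrak{K}'(\theta,\theta^+)\beta\le\Gamma^2,\ \ |\xi_i^\top\mathfrak{K}'(\theta,\theta^+)\beta-\widetilde y_i|\le\bar\delta\ \ \forall i\in\{1,\dots,N_k\},$$ with $\xi_i\in\mathbb{R}^N$ the $i$-th standard basis vector. In particular $f(\theta^+)-f(\theta)+c\mu\nabla f(\theta)^\top\nabla m_k(\theta)\le\bar b(\theta,\mu)$.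
   Context: A kernel is a continuous, symmetric, twice continuously differentiable function $\kappa:\mathbb{R}^{n_\theta}\times\mathbb{R}^{n_\theta}\to\mathbb{R}$ that is positive definite in the sense that for every $N\in\mathbb{N}$ and every $\theta_1,\dots,\theta_N\in\mathbb{R}^{n_\theta}$ the matrix $[\kappa(\theta_i,\theta_j)]_{i,j}$ is positive semidefinite. $\mathcal{H}$ is its unique reproducing kernel Hilbert space (completion of finite sums $\sum_i\alpha_i\kappa(\cdot,\theta_i)$ under $\langle\kappa(\cdot,a),\kappa(\cdot,b)\rangle=\kappa(a,b)$), with norm $\lVert g\rVert=\sqrt{\langle g,g\rangle}$. Notation: $D^{(a,b)}\kappa(\theta,\theta')$ denotes the mixed partial derivative of $\kappa$ of multi-order $a$ in the first argument and $b$ in the second; $e_j\in\mathbb{R}^{n_\theta}$ is the $j$-th standard basis vector. With $\Omega=\{\widetilde\theta_1,\dots,\widetilde\theta_{N_k}\}$: $K_{\Omega\Omega}$ is the $N_k\times N_k$ matrix with entries $\kappa(\widetilde\theta_i,\widetilde\theta_j)$; $K_\Omega(z)=[\kappa(z,\widetilde\theta_1)\ \cdots\ \kappa(z,\widetilde\theta_{N_k})]$ (row vector); $\nabla K_\Omega(z)$ is the $n_\theta\times N_k$ matrix with $(j,i)$ entry $D^{(e_j,0)}\kappa(z,\widetilde\theta_i)$; $\nabla K(a,b):=[D^{(e_1,0)}\kappa(a,b)\ \cdots\ D^{(e_{n_\theta},0)}\kappa(a,b)]^\top\in\mathbb{R}^{n_\theta}$; $D^2_{1,2}\kappa(\theta,\theta)$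 is the $n_\theta\times n_\theta$ matrix with $(i,j)$ entry $D^{(e_i,e_j)}\kappa(\theta,\theta)$. $$\mathfrak{K}(\theta):=\begin{bmatrix}K_{\Omega\Omega} & \nabla K_\Omega(\theta)^\top\\ \nabla K_\Omega(\theta) & D^2_{1,2}\kappa(\theta,\theta)\end{bmatrix},$$ $$\mathfrak{K}'(\theta,\theta^+):=\begin{bmatrix}K_{\Omega\Omega} & K_\Omega(\theta)^\top & K_\Omega(\theta^+)^\top & \nabla K_\Omega(\theta)^\top\\ K_\Omega(\theta) & \kappa(\theta,\theta) & \kappa(\theta,\theta^+) & \nabla K(\theta,\theta)^\top\\ K_\Omega(\theta^+) & \kappa(\theta^+,\theta) & \kappa(\theta^+,\theta^+) & \nabla K(\theta,\theta^+)^\top\\ \nabla K_\Omega(\theta) & \nabla K(\theta,\theta) & \nabla K(\theta,\theta^+) & D^2_{1,2}\kappa(\theta,\theta)\end{bmatrix}.$$ If points among $\widetilde\theta_1,\dots,\widetilde\theta_{N_k},\theta,\theta^+$ coincide, duplicated rows/columns may be removed; this does not change the optimal values. *)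

theory Defs
  imports "HOL-Analysis.Analysis"
begin

definition pd1 :: "(real^'n \<Rightarrow> real^'n \<Rightarrow> real) \<Rightarrow> 'n \<Rightarrow> real^'n \<Rightarrow> real^'n \<Rightarrow> real" where
  "pd1 k j a b = deriv (\<lambda>t. k (a + t *\<^sub>R axis j 1) b) 0"

definition pd12 :: "(real^'n \<Rightarrow> real^'n \<Rightarrow> real) \<Rightarrow> 'n \<Rightarrow> 'n \<Rightarrow> real^'n \<Rightarrow> real^'n \<Rightarrow> real" where
  "pd12 k i j a b = deriv (\<lambda>s. pd1 k i a (b + s *\<^sub>R axis j 1)) 0"

definition grad :: "(real^'n \<Rightarrow> real) \<Rightarrow> real^'n \<Rightarrow> real^'n" where
  "grad g x = (\<chi> j. deriv (\<lambda>t. g (x + t *\<^sub>R axis j 1)) 0)"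

definition C2 :: "('a::real_normed_vector \<Rightarrow> real) \<Rightarrow> bool" where
  "C2 f \<longleftrightarrow> (\<exists>(D1 :: 'a \<Rightarrow> 'a \<Rightarrow>\<^sub>L real) (D2 :: 'a \<Rightarrow> 'a \<Rightarrow>\<^sub>L ('a \<Rightarrow>\<^sub>L real)).
      (\<forall>x. (f has_derivative blinfun_apply (D1 x)) (at x)) \<and>
      (\<forall>x. (D1 has_derivative blinfun_apply (D2 x)) (at x)) \<and>
      continuous_on UNIV D2)"

definition is_kernel :: "(real^'n \<Rightarrow> real^'n \<Rightarrow> real) \<Rightarrow> bool" where
  "is_kernel k \<longleftrightarrow>
     continuous_on UNIV (\<lambda>z. k (fst z) (snd z)) \<and>
     (\<forall>a b. k a b = k b a) \<and>
     C2 (\<lambda>z :: (real^'n) \<times> (real^'n). k (fst z) (snd z)) \<and>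
     (\<forall>(N::nat) (p :: nat \<Rightarrow> real^'n) (\<alpha> :: nat \<Rightarrow> real).
        0 \<le> (\<Sum>i<N. \<Sum>j<N. \<alpha> i * \<alpha> j * k (p i) (p j)))"

definition rnorm :: "(('a \<Rightarrow> real) \<Rightarrow> ('a \<Rightarrow> real) \<Rightarrow> real) \<Rightarrow> ('a \<Rightarrow> real) \<Rightarrow> real" where
  "rnorm ip g = sqrt (ip g g)"

text \<open>(H, ip) is a real Hilbert space of functions in which k is a reproducing
  kernel. By the Moore-Aronszajn theorem this determines (H, ip) uniquely, so it is
  the RKHS of k.\<close>
definition is_RKHS :: "(real^'n \<Rightarrow> real^'n \<Rightarrow> real) \<Rightarrow> (real^'n \<Rightarrow> real) set
    \<Rightarrow> ((real^'n \<Rightarrow> real) \<Rightarrow> (real^'n \<Rightarrow> real) \<Rightarrow> real) \<Rightarrow> bool" where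
  "is_RKHS k H ip \<longleftrightarrow>
     (\<forall>y. (\<lambda>x. k x y) \<in> H) \<and>
     (\<forall>g\<in>H. \<forall>h\<in>H. (\<lambda>x. g x + h x) \<in> H) \<and>
     (\<forall>g\<in>H. \<forall>c::real. (\<lambda>x. c * g x) \<in> H) \<and>
     (\<forall>g\<in>H. \<forall>h\<in>H. ip g h = ip h g) \<and>
     (\<forall>g\<in>H. \<forall>h\<in>H. \<forall>u\<in>H. ip (\<lambda>x. g x + h x) u = ip g u + ip h u) \<and>
     (\<forall>g\<in>H. \<forall>h\<in>H. \<forall>c::real. ip (\<lambda>x. c * g x) h = c * ip g h) \<and>
     (\<forall>g\<in>H. 0 \<le> ip g g) \<and>
     (\<forall>g\<in>H. ip g g = 0 \<longrightarrow> g = (\<lambda>x. 0)) \<and>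
     (\<forall>g\<in>H. \<forall>y. ip g (\<lambda>x. k x y) = g y) \<and>
     (\<forall>s :: nat \<Rightarrow> (real^'n \<Rightarrow> real).
        (\<forall>n. s n \<in> H) \<and>
        (\<forall>e>0. \<exists>M. \<forall>m\<ge>M. \<forall>n\<ge>M. rnorm ip (\<lambda>x. s m x - s n x) < e)
        \<longrightarrow> (\<exists>l\<in>H. (\<lambda>n. rnorm ip (\<lambda>x. s n x - l x)) \<longlonglongrightarrow> 0))"

text \<open>Index set of the block matrix frakK(theta): data points Dat i (i < N_k)
  followed by the n_theta gradient components Gr j.\<close>
datatype 'n idx1 = Dat nat | Gr 'n

definition idx1_set :: "nat \<Rightarrow> ('n::finite) idx1 set" where
  "idx1_set Nk = Dat ` {..<Nk} \<union> range Gr"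

definition Kfrak :: "(real^'n \<Rightarrow> real^'n \<Rightarrow> real) \<Rightarrow> (nat \<Rightarrow> real^'n) \<Rightarrow> real^'n
    \<Rightarrow> 'n idx1 \<Rightarrow> 'n idx1 \<Rightarrow> real" where
  "Kfrak k th \<theta> p q =
     (case p of
        Dat i \<Rightarrow> (case q of Dat j \<Rightarrow> k (th i) (th j) | Gr l \<Rightarrow> pd1 k l \<theta> (th i))
      | Gr l \<Rightarrow> (case q of Dat j \<Rightarrow> pd1 k l \<theta> (th j) | Gr l' \<Rightarrow> pd12 k l l' \<theta> \<theta>))"

text \<open>Index set of frakK'(theta,theta+): data points, theta, theta+, gradient
  components.\<close>
datatype 'n idx2 = Dat2 nat | Th | ThP | Gr2 'n

definition idx2_set :: "nat \<Rightarrow> ('n::finite) idx2 set" where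
  "idx2_set Nk = Dat2 ` {..<Nk} \<union> {Th, ThP} \<union> range Gr2"

definition Kfrak2 :: "(real^'n \<Rightarrow> real^'n \<Rightarrow> real) \<Rightarrow> (nat \<Rightarrow> real^'n) \<Rightarrow> real^'n \<Rightarrow> real^'n
    \<Rightarrow> 'n idx2 \<Rightarrow> 'n idx2 \<Rightarrow> real" where
  "Kfrak2 k th \<theta> \<theta>p p q =
     (case p of
        Dat2 i \<Rightarrow> (case q of Dat2 j \<Rightarrow> k (th i) (th j) | Th \<Rightarrow> k \<theta> (th i)
                   | ThP \<Rightarrow> k \<theta>p (th i) | Gr2 l \<Rightarrow> pd1 k l \<theta> (th i))
      | Th \<Rightarrow> (case q of Dat2 j \<Rightarrow> k \<theta> (th j) | Th \<Rightarrow> k \<theta> \<theta>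
                   | ThP \<Rightarrow> k \<theta> \<theta>p | Gr2 l \<Rightarrow> pd1 k l \<theta> \<theta>)
      | ThP \<Rightarrow> (case q of Dat2 j \<Rightarrow> k \<theta>p (th j) | Th \<Rightarrow> k \<theta>p \<theta>
                   | ThP \<Rightarrow> k \<theta>p \<theta>p | Gr2 l \<Rightarrow> pd1 k l \<theta> \<theta>p)
      | Gr2 l \<Rightarrow> (case q of Dat2 j \<Rightarrow> pd1 k l \<theta> (th j) | Th \<Rightarrow> pd1 k l \<theta> \<theta>
                   | ThP \<Rightarrow> pd1 k l \<theta> \<theta>p | Gr2 l' \<Rightarrow> pd12 k l l' \<theta> \<theta>))"

definition quadf :: "'i set \<Rightarrow> ('i \<Rightarrow> 'i \<Rightarrow> real) \<Rightarrow> ('i \<Rightarrow> real) \<Rightarrow> real" where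
  "quadf I M \<beta> = (\<Sum>p\<in>I. \<Sum>q\<in>I. \<beta> p * M p q * \<beta> q)"

definition mrow :: "'i set \<Rightarrow> ('i \<Rightarrow> 'i \<Rightarrow> real) \<Rightarrow> 'i \<Rightarrow> ('i \<Rightarrow> real) \<Rightarrow> real" where
  "mrow I M p \<beta> = (\<Sum>q\<in>I. M p q * \<beta> q)"

definition linf :: "'i set \<Rightarrow> ('i \<Rightarrow> real) \<Rightarrow> ('i \<Rightarrow> 'i \<Rightarrow> real) \<Rightarrow> ('i \<Rightarrow> real) \<Rightarrow> real" where
  "linf I c M \<beta> = (\<Sum>p\<in>I. c p * mrow I M p \<beta>)"

definition cost1 :: "real^'n \<Rightarrow> 'n idx1 \<Rightarrow> real" where
  "cost1 v p = (case p of Dat i \<Rightarrow> 0 | Gr j \<Rightarrow> v $ j)"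

definition cost2 :: "real \<Rightarrow> real \<Rightarrow> real^'n \<Rightarrow> 'n idx2 \<Rightarrow> real" where
  "cost2 c \<mu> v p = (case p of Dat2 i \<Rightarrow> 0 | Th \<Rightarrow> -1 | ThP \<Rightarrow> 1 | Gr2 j \<Rightarrow> c * \<mu> * v $ j)"

text \<open>beta is feasible: beta^T M beta <= Gamma^2 and |xi_i^T M beta - y_i| <= delta,
  where xi_i^T M beta is the row of M indexed by data point i applied to beta.\<close>
definition socp1_feasible where
  "socp1_feasible k th yt Nk \<delta> \<Gamma> \<theta> (\<beta> :: ('n::finite) idx1 \<Rightarrow> real) \<longleftrightarrow>
     quadf (idx1_set Nk) (Kfrak k th \<theta>) \<beta> \<le> \<Gamma>\<^sup>2 \<and>
     (\<forall>i<Nk. \<bar>mrow (idx1_set Nk) (Kfrak k th \<theta>) (Dat i) \<beta> - yt i\<bar> \<le> \<delta>)"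

definition socp2_feasible where
  "socp2_feasible k th yt Nk \<delta> \<Gamma> \<theta> \<theta>p (\<beta> :: ('n::finite) idx2 \<Rightarrow> real) \<longleftrightarrow>
     quadf (idx2_set Nk) (Kfrak2 k th \<theta> \<theta>p) \<beta> \<le> \<Gamma>\<^sup>2 \<and>
     (\<forall>i<Nk. \<bar>mrow (idx2_set Nk) (Kfrak2 k th \<theta> \<theta>p) (Dat2 i) \<beta> - yt i\<bar> \<le> \<delta>)"

end

theory Submission
  imports Defs
begin



locale rk =
  fixes k :: "real^'n \<Rightarrow> real^'n \<Rightarrow> real"
    and H :: "(real^'n \<Rightarrow> real) set"
    and ip :: "(real^'n \<Rightarrow> real) \<Rightarrow> (real^'n \<Rightarrow> real) \<Rightarrow> real"
  assumes R: "is_RKHS k H ip"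
begin

lemma kH: "(\<lambda>x. k x y) \<in> H" using R unfolding is_RKHS_def by blast
lemma addH: "g \<in> H \<Longrightarrow> h \<in> H \<Longrightarrow> (\<lambda>x. g x + h x) \<in> H" using R unfolding is_RKHS_def by blast
lemma scH: "g \<in> H \<Longrightarrow> (\<lambda>x. c * g x) \<in> H" using R unfolding is_RKHS_def by blast
lemma ip_sym: "g \<in> H \<Longrightarrow> h \<in> H \<Longrightarrow> ip g h = ip h g" using R unfolding is_RKHS_def by blast
lemma ip_add: "g \<in> H \<Longrightarrow> h \<in> H \<Longrightarrow> u \<in> H \<Longrightarrow> ip (\<lambda>x. g x + h x) u = ip g u + ip h u"
  using R unfolding is_RKHS_def by blast
lemma ip_sc: "g \<in> H \<Longrightarrow> h \<in> H \<Longrightarrow> ip (\<lambda>x. c * g x) h = c * ip g h"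
  using R unfolding is_RKHS_def by blast
lemma ip_pos: "g \<in> H \<Longrightarrow> 0 \<le> ip g g" using R unfolding is_RKHS_def by blast
lemma ip_def0: "g \<in> H \<Longrightarrow> ip g g = 0 \<Longrightarrow> g = (\<lambda>x. 0)" using R unfolding is_RKHS_def by blast
lemma repr: "g \<in> H \<Longrightarrow> ip g (\<lambda>x. k x y) = g y" using R unfolding is_RKHS_def by blast
lemma complete: "(\<forall>n. s n \<in> H) \<Longrightarrow>
        (\<forall>e>0. \<exists>M. \<forall>m\<ge>M. \<forall>n\<ge>M. rnorm ip (\<lambda>x. s m x - s n x) < e)
        \<Longrightarrow> (\<exists>l\<in>H. (\<lambda>n. rnorm ip (\<lambda>x. s n x - l x)) \<longlonglongrightarrow> 0)"
  using R unfolding is_RKHS_def by blast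

lemma zeroH: "(\<lambda>x. 0) \<in> H"
  using scH[OF kH, of 0] by simp
lemma diffH: "g \<in> H \<Longrightarrow> h \<in> H \<Longrightarrow> (\<lambda>x. g x - h x) \<in> H"
  using addH[of g "\<lambda>x. (-1) * h x"] scH[of h "-1"] by simp
lemma ip_add_r: "g \<in> H \<Longrightarrow> h \<in> H \<Longrightarrow> u \<in> H \<Longrightarrow> ip u (\<lambda>x. g x + h x) = ip u g + ip u h"
  by (metis addH ip_add ip_sym)
lemma ip_sc_r: "g \<in> H \<Longrightarrow> h \<in> H \<Longrightarrow> ip h (\<lambda>x. c * g x) = c * ip h g"
  by (metis scH ip_sc ip_sym)
lemma ip_diff: "g \<in> H \<Longrightarrow> h \<in> H \<Longrightarrow> u \<in> H \<Longrightarrow> ip (\<lambda>x. g x - h x) u = ip g u - ip h u"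
  using ip_add[of g "\<lambda>x. (-1) * h x" u] ip_sc[of h u "-1"] scH[of h "-1"] by simp
lemma ip_diff_r: "g \<in> H \<Longrightarrow> h \<in> H \<Longrightarrow> u \<in> H \<Longrightarrow> ip u (\<lambda>x. g x - h x) = ip u g - ip u h"
  by (metis diffH ip_diff ip_sym)
lemma ip_zero: "u \<in> H \<Longrightarrow> ip (\<lambda>x. 0) u = 0"
  using ip_sc[of u u 0] by simp
lemma ip_zero_r: "u \<in> H \<Longrightarrow> ip u (\<lambda>x. 0) = 0"
  by (metis ip_sym ip_zero zeroH)
lemma ip_divide: "g \<in> H \<Longrightarrow> h \<in> H \<Longrightarrow> ip (\<lambda>x. g x / c) h = ip g h / c"
  using ip_sc[of g h "1/c"] by simp
lemma divH: "g \<in> H \<Longrightarrow> (\<lambda>x. g x / c) \<in> H"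
  using scH[of g "1/c"] by simp

lemma sumH: "finite A \<Longrightarrow> (\<forall>a\<in>A. f a \<in> H) \<Longrightarrow> (\<lambda>x. \<Sum>a\<in>A. c a * f a x) \<in> H"
proof (induction A rule: finite_induct)
  case empty then show ?case using zeroH by simp
next
  case (insert a A)
  then show ?case using addH[OF scH[of "f a" "c a"], of "\<lambda>x. \<Sum>a\<in>A. c a * f a x"] by simp
qed

lemma ip_sum: "finite A \<Longrightarrow> (\<forall>a\<in>A. f a \<in> H) \<Longrightarrow> u \<in> H \<Longrightarrow>
   ip (\<lambda>x. \<Sum>a\<in>A. c a * f a x) u = (\<Sum>a\<in>A. c a * ip (f a) u)"
proof (induction A rule: finite_induct)
  case empty then show ?case using ip_zero by simp
next
  case (insert a A)
  have "ip (\<lambda>x. \<Sum>a\<in>insert a A. c a * f a x) u = ip (\<lambda>x. c a * f a x + (\<Sum>a\<in>A. c a * f a x)) u"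
    using insert by simp
  also have "\<dots> = c a * ip (f a) u + ip (\<lambda>x. (\<Sum>a\<in>A. c a * f a x)) u"
    using insert ip_add[OF scH[of "f a" "c a"] sumH[of A f c]] ip_sc by simp
  finally show ?case using insert by simp
qed

lemma ip_sum_r: "finite A \<Longrightarrow> (\<forall>a\<in>A. f a \<in> H) \<Longrightarrow> u \<in> H \<Longrightarrow>
   ip u (\<lambda>x. \<Sum>a\<in>A. c a * f a x) = (\<Sum>a\<in>A. c a * ip u (f a))"
  using ip_sum[of A f u c] sumH[of A f c] ip_sym by (simp add: ip_sym)

lemma ksym: "k a b = k b a"
  using repr[OF kH, of b a] repr[OF kH, of a b] ip_sym[OF kH kH, of a b] by simp

lemma ip_sq: "g \<in> H \<Longrightarrow> h \<in> H \<Longrightarrow>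
  ip (\<lambda>x. g x - h x) (\<lambda>x. g x - h x) = ip g g - 2 * ip g h + ip h h"
  using ip_diff[of g h] ip_diff_r[of g h] diffH ip_sym[of g h] by simp

lemma ip_sq_le: "a \<in> H \<Longrightarrow> b \<in> H \<Longrightarrow> c \<in> H \<Longrightarrow>
  ip (\<lambda>x. a x - c x) (\<lambda>x. a x - c x) \<le> 2 * ip (\<lambda>x. a x - b x) (\<lambda>x. a x - b x) + 2 * ip (\<lambda>x. b x - c x) (\<lambda>x. b x - c x)"
proof -
  assume H: "a \<in> H" "b \<in> H" "c \<in> H"
  define u where "u = (\<lambda>x. a x - b x)"
  define v where "v = (\<lambda>x. b x - c x)"
  have uH: "u \<in> H" and vH: "v \<in> H" using H diffH u_def v_def by auto
  have e: "(\<lambda>x. a x - c x) = (\<lambda>x. u x + v x)" by (auto simp: u_def v_def)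
  have e2: "ip (\<lambda>x. u x + v x) (\<lambda>x. u x + v x) = ip u u + 2 * ip u v + ip v v"
    using ip_add[OF uH vH addH[OF uH vH]] ip_add_r[OF uH vH] uH vH ip_sym[OF uH vH] by simp
  have "0 \<le> ip (\<lambda>x. u x - v x) (\<lambda>x. u x - v x)" using ip_pos diffH uH vH by blast
  then have "0 \<le> ip u u - 2 * ip u v + ip v v" using ip_sq uH vH by simp
  then show ?thesis unfolding e e2 u_def[symmetric] v_def[symmetric] by simp
qed

lemma cs: "g \<in> H \<Longrightarrow> h \<in> H \<Longrightarrow> (ip g h)^2 \<le> ip g g * ip h h"
proof -
  assume gH: "g \<in> H" and hH: "h \<in> H"
  show ?thesis
  proof (cases "ip h h = 0")
    case True
    then have "h = (\<lambda>x. 0)" using ip_def0 hH by blast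
    then show ?thesis using ip_zero_r gH True by simp
  next
    case False
    then have hp: "ip h h > 0" using ip_pos[OF hH] by simp
    define t where "t = ip g h / ip h h"
    have "0 \<le> ip (\<lambda>x. g x - t * h x) (\<lambda>x. g x - t * h x)" using ip_pos diffH scH gH hH by blast
    also have "\<dots> = ip g g - 2 * ip g (\<lambda>x. t * h x) + ip (\<lambda>x. t * h x) (\<lambda>x. t * h x)"
      using ip_sq[OF gH scH[OF hH]] by simp
    also have "\<dots> = ip g g - 2 * t * ip g h + t * t * ip h h"
      using ip_sc_r[OF hH gH] ip_sc[OF hH scH[OF hH]] ip_sc_r[OF hH hH] by simp
    also have "\<dots> = ip g g - (ip g h)^2 / ip h h"
      using hp by (simp add: t_def field_simps power2_eq_square)
    finally have "(ip g h)^2 / ip h h \<le> ip g g" by simp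
    then show ?thesis using hp by (simp add: field_simps)
  qed
qed

lemma rnorm_sq: "g \<in> H \<Longrightarrow> (rnorm ip g)^2 = ip g g"
  using ip_pos by (simp add: rnorm_def)

end



lemma pderiv1:
  fixes F :: "'a::real_normed_vector \<times> 'b::real_normed_vector \<Rightarrow> real"
  assumes d1: "\<forall>x. (F has_derivative blinfun_apply (D1 x)) (at x)"
  shows "((\<lambda>\<tau>. F (a + \<tau> *\<^sub>R u, b)) has_real_derivative D1 (a + \<tau>0 *\<^sub>R u, b) (u, 0)) (at \<tau>0)"
proof -
  have g: "((\<lambda>\<tau>. (a + \<tau> *\<^sub>R u, b)) has_derivative (\<lambda>h. h *\<^sub>R (u, 0))) (at \<tau>0)"
    by (auto intro!: derivative_eq_intros simp: zero_prod_def)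
  have "((\<lambda>\<tau>. F (a + \<tau> *\<^sub>R u, b)) has_derivative (\<lambda>h. D1 (a + \<tau>0 *\<^sub>R u, b) (h *\<^sub>R (u, 0)))) (at \<tau>0)"
    using has_derivative_compose[OF g d1[rule_format]] by simp
  moreover have "(\<lambda>h. D1 (a + \<tau>0 *\<^sub>R u, b) (h *\<^sub>R (u, 0))) = (*) (D1 (a + \<tau>0 *\<^sub>R u, b) (u, 0))"
    by (rule ext, subst blinfun.scaleR_right) simp
  ultimately show ?thesis unfolding has_field_derivative_def by simp
qed

lemma pderiv2:
  fixes D1 :: "'a::real_normed_vector \<times> 'b::real_normed_vector \<Rightarrow> ('a \<times> 'b) \<Rightarrow>\<^sub>L real"
  assumes d2: "\<forall>x. (D1 has_derivative blinfun_apply (D2 x)) (at x)"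
  shows "((\<lambda>\<sigma>. D1 (a, b + \<sigma> *\<^sub>R v) w) has_real_derivative D2 (a, b + \<sigma>0 *\<^sub>R v) (0, v) w) (at \<sigma>0)"
proof -
  have g: "((\<lambda>\<sigma>. (a, b + \<sigma> *\<^sub>R v)) has_derivative (\<lambda>h. h *\<^sub>R (0, v))) (at \<sigma>0)"
    by (auto intro!: derivative_eq_intros simp: zero_prod_def)
  have "((\<lambda>\<sigma>. D1 (a, b + \<sigma> *\<^sub>R v)) has_derivative (\<lambda>h. D2 (a, b + \<sigma>0 *\<^sub>R v) (h *\<^sub>R (0, v)))) (at \<sigma>0)"
    using has_derivative_compose[OF g d2[rule_format]] by simp
  from bounded_linear.has_derivative[OF blinfun.bounded_linear_left this, of w]
  have "((\<lambda>\<sigma>. D1 (a, b + \<sigma> *\<^sub>R v) w) has_derivative (\<lambda>h. D2 (a, b + \<sigma>0 *\<^sub>R v) (h *\<^sub>R (0, v)) w)) (at \<sigma>0)" .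
  moreover have "(\<lambda>h. D2 (a, b + \<sigma>0 *\<^sub>R v) (h *\<^sub>R (0, v)) w) = (*) (D2 (a, b + \<sigma>0 *\<^sub>R v) (0, v) w)"
    by (rule ext, subst blinfun.scaleR_right) (simp add: blinfun.scaleR_left)
  ultimately show ?thesis unfolding has_field_derivative_def by simp
qed

lemma mvt0:
  fixes f :: "real \<Rightarrow> real"
  assumes "\<And>x. DERIV f x :> f' x" "t \<noteq> 0"
  shows "\<exists>\<tau>. \<bar>\<tau>\<bar> \<le> \<bar>t\<bar> \<and> f t - f 0 = t * f' \<tau>"
proof (cases "t > 0")
  case True
  from MVT2[OF True assms(1)] obtain z where "0 < z" "z < t" "f t - f 0 = (t - 0) * f' z" by blast
  then show ?thesis by (intro exI[of _ z]) auto
next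
  case False
  then have "t < 0" using assms(2) by simp
  from MVT2[OF this assms(1)] obtain z where "t < z" "z < 0" "f 0 - f t = (0 - t) * f' z" by blast
  then show ?thesis by (intro exI[of _ z]) auto
qed

lemma mixed:
  fixes k :: "real^'n \<Rightarrow> real^'n \<Rightarrow> real"
  assumes C: "C2 (\<lambda>z::(real^'n)\<times>(real^'n). k (fst z) (snd z))" and ne: "norm e = 1"
  shows "\<exists>c. \<forall>\<epsilon>>0. \<exists>\<eta>>0. \<forall>s t. s \<noteq> 0 \<longrightarrow> t \<noteq> 0 \<longrightarrow> \<bar>s\<bar> < \<eta> \<longrightarrow> \<bar>t\<bar> < \<eta> \<longrightarrow>
     \<bar>(k (\<theta> + t *\<^sub>R e) (\<theta> + s *\<^sub>R e) - k (\<theta> + t *\<^sub>R e) \<theta> - k \<theta> (\<theta> + s *\<^sub>R e) + k \<theta> \<theta>)/(s*t) - c\<bar> < \<epsilon>"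
proof -
  define F where "F = (\<lambda>z::(real^'n)\<times>(real^'n). k (fst z) (snd z))"
  obtain D1 :: "(real^'n)\<times>(real^'n) \<Rightarrow> ((real^'n)\<times>(real^'n)) \<Rightarrow>\<^sub>L real"
     and D2 :: "(real^'n)\<times>(real^'n) \<Rightarrow> ((real^'n)\<times>(real^'n)) \<Rightarrow>\<^sub>L (((real^'n)\<times>(real^'n)) \<Rightarrow>\<^sub>L real)"
    where d1: "\<forall>x. (F has_derivative blinfun_apply (D1 x)) (at x)"
      and d2: "\<forall>x. (D1 has_derivative blinfun_apply (D2 x)) (at x)"
      and cont: "continuous_on UNIV D2"
    using C unfolding C2_def F_def by blast
  have kF: "k a b = F (a, b)" for a b by (simp add: F_def)
  define c where "c = D2 (\<theta>, \<theta>) (0, e) (e, 0)"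
  have rep: "\<exists>\<tau> \<sigma>. \<bar>\<tau>\<bar> \<le> \<bar>t\<bar> \<and> \<bar>\<sigma>\<bar> \<le> \<bar>s\<bar> \<and>
     (k (\<theta> + t *\<^sub>R e) (\<theta> + s *\<^sub>R e) - k (\<theta> + t *\<^sub>R e) \<theta> - k \<theta> (\<theta> + s *\<^sub>R e) + k \<theta> \<theta>)
       = t * s * D2 (\<theta> + \<tau> *\<^sub>R e, \<theta> + \<sigma> *\<^sub>R e) (0, e) (e, 0)"
    if st: "s \<noteq> 0" "t \<noteq> 0" for s t
  proof -
    define p where "p = (\<lambda>\<tau>. F (\<theta> + \<tau> *\<^sub>R e, \<theta> + s *\<^sub>R e) - F (\<theta> + \<tau> *\<^sub>R e, \<theta>))"
    have dp: "DERIV p x :> D1 (\<theta> + x *\<^sub>R e, \<theta> + s *\<^sub>R e) (e, 0) - D1 (\<theta> + x *\<^sub>R e, \<theta>) (e, 0)" for x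
      unfolding p_def by (rule DERIV_diff[OF pderiv1[OF d1] pderiv1[OF d1]])
    obtain \<tau> where \<tau>: "\<bar>\<tau>\<bar> \<le> \<bar>t\<bar>"
      "p t - p 0 = t * (D1 (\<theta> + \<tau> *\<^sub>R e, \<theta> + s *\<^sub>R e) (e, 0) - D1 (\<theta> + \<tau> *\<^sub>R e, \<theta>) (e, 0))"
      using mvt0[OF dp st(2)] by blast
    define q where "q = (\<lambda>\<sigma>. D1 (\<theta> + \<tau> *\<^sub>R e, \<theta> + \<sigma> *\<^sub>R e) (e, 0))"
    have dq: "DERIV q x :> D2 (\<theta> + \<tau> *\<^sub>R e, \<theta> + x *\<^sub>R e) (0, e) (e, 0)" for x
      unfolding q_def by (rule pderiv2[OF d2])
    obtain \<sigma> where \<sigma>: "\<bar>\<sigma>\<bar> \<le> \<bar>s\<bar>"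
      "q s - q 0 = s * D2 (\<theta> + \<tau> *\<^sub>R e, \<theta> + \<sigma> *\<^sub>R e) (0, e) (e, 0)"
      using mvt0[OF dq st(1)] by blast
    have "k (\<theta> + t *\<^sub>R e) (\<theta> + s *\<^sub>R e) - k (\<theta> + t *\<^sub>R e) \<theta> - k \<theta> (\<theta> + s *\<^sub>R e) + k \<theta> \<theta> = p t - p 0"
      by (simp add: p_def kF)
    also have "\<dots> = t * (q s - q 0)" using \<tau>(2) by (simp add: q_def)
    also have "\<dots> = t * s * D2 (\<theta> + \<tau> *\<^sub>R e, \<theta> + \<sigma> *\<^sub>R e) (0, e) (e, 0)" using \<sigma>(2) by simp
    finally show ?thesis using \<tau>(1) \<sigma>(1) by blast
  qed
  have est: "\<bar>D2 z (0, e) (e, 0) - c\<bar> \<le> norm (D2 z - D2 (\<theta>, \<theta>))" for z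
  proof -
    have "\<bar>D2 z (0, e) (e, 0) - c\<bar> = norm (blinfun_apply (blinfun_apply (D2 z - D2 (\<theta>, \<theta>)) (0, e)) (e, 0))"
      by (simp add: c_def blinfun.diff_left)
    also have "\<dots> \<le> norm (blinfun_apply (D2 z - D2 (\<theta>, \<theta>)) (0, e)) * norm (e, 0::real^'n)"
      by (rule norm_blinfun)
    also have "\<dots> \<le> norm (D2 z - D2 (\<theta>, \<theta>)) * norm (0::real^'n, e) * norm (e, 0::real^'n)"
      by (intro mult_right_mono norm_blinfun norm_ge_zero)
    also have "\<dots> = norm (D2 z - D2 (\<theta>, \<theta>))" by (simp add: norm_Pair ne)
    finally show ?thesis .
  qed
  show ?thesis
  proof (rule exI[of _ c], intro allI impI)
    fix \<epsilon> :: real assume ep: "\<epsilon> > 0"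
    obtain d where d: "d > 0" "\<And>z. dist z (\<theta>, \<theta>) < d \<Longrightarrow> dist (D2 z) (D2 (\<theta>, \<theta>)) < \<epsilon>"
      using cont ep unfolding continuous_on_iff by (meson UNIV_I)
    show "\<exists>\<eta>>0. \<forall>s t. s \<noteq> 0 \<longrightarrow> t \<noteq> 0 \<longrightarrow> \<bar>s\<bar> < \<eta> \<longrightarrow> \<bar>t\<bar> < \<eta> \<longrightarrow>
     \<bar>(k (\<theta> + t *\<^sub>R e) (\<theta> + s *\<^sub>R e) - k (\<theta> + t *\<^sub>R e) \<theta> - k \<theta> (\<theta> + s *\<^sub>R e) + k \<theta> \<theta>)/(s*t) - c\<bar> < \<epsilon>"
    proof (intro exI[of _ "d/2"] conjI allI impI)
      show "d/2 > 0" using d by simp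
      fix s t :: real assume st: "s \<noteq> 0" "t \<noteq> 0" "\<bar>s\<bar> < d/2" "\<bar>t\<bar> < d/2"
      obtain \<tau> \<sigma> where ts: "\<bar>\<tau>\<bar> \<le> \<bar>t\<bar>" "\<bar>\<sigma>\<bar> \<le> \<bar>s\<bar>" and
        N: "(k (\<theta> + t *\<^sub>R e) (\<theta> + s *\<^sub>R e) - k (\<theta> + t *\<^sub>R e) \<theta> - k \<theta> (\<theta> + s *\<^sub>R e) + k \<theta> \<theta>)
           = t * s * D2 (\<theta> + \<tau> *\<^sub>R e, \<theta> + \<sigma> *\<^sub>R e) (0, e) (e, 0)"
        using rep[OF st(1,2)] by blast
      have "dist (\<theta> + \<tau> *\<^sub>R e, \<theta> + \<sigma> *\<^sub>R e) (\<theta>, \<theta>) = norm (\<tau> *\<^sub>R e, \<sigma> *\<^sub>R e)"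
        by (simp add: dist_norm)
      also have "\<dots> \<le> norm (\<tau> *\<^sub>R e) + norm (\<sigma> *\<^sub>R e)" by (rule norm_Pair_le)
      also have "\<dots> = \<bar>\<tau>\<bar> + \<bar>\<sigma>\<bar>" by (simp add: ne)
      also have "\<dots> < d" using ts st by simp
      finally have "dist (D2 (\<theta> + \<tau> *\<^sub>R e, \<theta> + \<sigma> *\<^sub>R e)) (D2 (\<theta>, \<theta>)) < \<epsilon>" using d(2) by blast
      then have "norm (D2 (\<theta> + \<tau> *\<^sub>R e, \<theta> + \<sigma> *\<^sub>R e) - D2 (\<theta>, \<theta>)) < \<epsilon>" by (simp add: dist_norm)
      moreover have "(k (\<theta> + t *\<^sub>R e) (\<theta> + s *\<^sub>R e) - k (\<theta> + t *\<^sub>R e) \<theta> - k \<theta> (\<theta> + s *\<^sub>R e) + k \<theta> \<theta>)/(s*t)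
          = D2 (\<theta> + \<tau> *\<^sub>R e, \<theta> + \<sigma> *\<^sub>R e) (0, e) (e, 0)" using N st by simp
      ultimately have "\<bar>D2 (\<theta> + \<tau> *\<^sub>R e, \<theta> + \<sigma> *\<^sub>R e) (0, e) (e, 0) - c\<bar> < \<epsilon>"
        using est[of "(\<theta> + \<tau> *\<^sub>R e, \<theta> + \<sigma> *\<^sub>R e)"] by linarith
      with N st show "\<bar>(k (\<theta> + t *\<^sub>R e) (\<theta> + s *\<^sub>R e) - k (\<theta> + t *\<^sub>R e) \<theta> - k \<theta> (\<theta> + s *\<^sub>R e) + k \<theta> \<theta>)/(s*t) - c\<bar> < \<epsilon>"
        by simp
    qed
  qed
qed




locale rkk = rk k H ip for k :: "real^'n \<Rightarrow> real^'n \<Rightarrow> real" and H ip +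
  assumes C: "C2 (\<lambda>z::(real^'n)\<times>(real^'n). k (fst z) (snd z))"
begin

definition Qf where "Qf \<theta> e t = (\<lambda>x. (k x (\<theta> + t *\<^sub>R e) - k x \<theta>) / t)"

lemma QH: "Qf \<theta> e t \<in> H"
  unfolding Qf_def by (intro divH diffH kH)

lemma ipQ: "g \<in> H \<Longrightarrow> ip g (Qf \<theta> e t) = (g (\<theta> + t *\<^sub>R e) - g \<theta>) / t"
proof -
  assume gH: "g \<in> H"
  have "ip g (Qf \<theta> e t) = ip (Qf \<theta> e t) g" using ip_sym[OF gH QH] .
  also have "\<dots> = ip (\<lambda>x. k x (\<theta> + t *\<^sub>R e) - k x \<theta>) g / t"
    unfolding Qf_def by (rule ip_divide[OF diffH[OF kH kH] gH])
  also have "\<dots> = (ip (\<lambda>x. k x (\<theta> + t *\<^sub>R e)) g - ip (\<lambda>x. k x \<theta>) g) / t"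
    using ip_diff[OF kH kH gH] by simp
  also have "\<dots> = (g (\<theta> + t *\<^sub>R e) - g \<theta>) / t"
    using repr[OF gH] ip_sym[OF gH kH] by metis
  finally show ?thesis .
qed

lemma ipQQ: "s \<noteq> 0 \<Longrightarrow> t \<noteq> 0 \<Longrightarrow> ip (Qf \<theta> e s) (Qf \<theta> e t) =
   (k (\<theta> + t *\<^sub>R e) (\<theta> + s *\<^sub>R e) - k (\<theta> + t *\<^sub>R e) \<theta> - k \<theta> (\<theta> + s *\<^sub>R e) + k \<theta> \<theta>)/(s*t)"
proof -
  assume st: "s \<noteq> 0" "t \<noteq> 0"
  have "ip (Qf \<theta> e s) (Qf \<theta> e t) = ((k (\<theta> + t *\<^sub>R e) (\<theta> + s *\<^sub>R e) - k (\<theta> + t *\<^sub>R e) \<theta>)/s - (k \<theta> (\<theta> + s *\<^sub>R e) - k \<theta> \<theta>)/s)/t"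
    using ipQ[OF QH, of \<theta> e s \<theta> e t] by (simp add: Qf_def)
  also have "\<dots> = (k (\<theta> + t *\<^sub>R e) (\<theta> + s *\<^sub>R e) - k (\<theta> + t *\<^sub>R e) \<theta> - k \<theta> (\<theta> + s *\<^sub>R e) + k \<theta> \<theta>)/(s*t)"
    using st by (simp add: field_simps)
  finally show ?thesis .
qed

lemma cauchyQ:
  assumes ne: "norm e = 1" and rho: "\<rho> > 0"
  shows "\<exists>\<eta>>0. \<forall>s t. s \<noteq> 0 \<longrightarrow> t \<noteq> 0 \<longrightarrow> \<bar>s\<bar> < \<eta> \<longrightarrow> \<bar>t\<bar> < \<eta> \<longrightarrow>
     ip (\<lambda>x. Qf \<theta> e s x - Qf \<theta> e t x) (\<lambda>x. Qf \<theta> e s x - Qf \<theta> e t x) < \<rho>"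
proof -
  obtain c where c: "\<forall>\<epsilon>>0. \<exists>\<eta>>0. \<forall>s t. s \<noteq> 0 \<longrightarrow> t \<noteq> 0 \<longrightarrow> \<bar>s\<bar> < \<eta> \<longrightarrow> \<bar>t\<bar> < \<eta> \<longrightarrow>
     \<bar>(k (\<theta> + t *\<^sub>R e) (\<theta> + s *\<^sub>R e) - k (\<theta> + t *\<^sub>R e) \<theta> - k \<theta> (\<theta> + s *\<^sub>R e) + k \<theta> \<theta>)/(s*t) - c\<bar> < \<epsilon>"
    using mixed[OF C ne] by blast
  obtain \<eta> where \<eta>: "\<eta> > 0" "\<And>s t. s \<noteq> 0 \<Longrightarrow> t \<noteq> 0 \<Longrightarrow> \<bar>s\<bar> < \<eta> \<Longrightarrow> \<bar>t\<bar> < \<eta> \<Longrightarrow>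
     \<bar>ip (Qf \<theta> e s) (Qf \<theta> e t) - c\<bar> < \<rho>/4"
    using c[rule_format, of "\<rho>/4"] rho ipQQ by (metis zero_less_divide_iff zero_less_numeral)
  show ?thesis
  proof (intro exI[of _ \<eta>] conjI allI impI)
    show "\<eta> > 0" by fact
    fix s t :: real assume st: "s \<noteq> 0" "t \<noteq> 0" "\<bar>s\<bar> < \<eta>" "\<bar>t\<bar> < \<eta>"
    have "ip (\<lambda>x. Qf \<theta> e s x - Qf \<theta> e t x) (\<lambda>x. Qf \<theta> e s x - Qf \<theta> e t x) =
      ip (Qf \<theta> e s) (Qf \<theta> e s) - 2 * ip (Qf \<theta> e s) (Qf \<theta> e t) + ip (Qf \<theta> e t) (Qf \<theta> e t)"
      using ip_sq[OF QH QH] by simp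
    also have "\<dots> < \<rho>" using \<eta>(2)[of s s] \<eta>(2)[of s t] \<eta>(2)[of t t] st by linarith
    finally show "ip (\<lambda>x. Qf \<theta> e s x - Qf \<theta> e t x) (\<lambda>x. Qf \<theta> e s x - Qf \<theta> e t x) < \<rho>" .
  qed
qed

lemma deriv_repr:
  assumes ne: "norm e = 1"
  shows "\<exists>l\<in>H. \<forall>g\<in>H. DERIV (\<lambda>\<tau>. g (\<theta> + \<tau> *\<^sub>R e)) 0 :> ip g l"
proof -
  define S where "S n = Qf \<theta> e (1 / real (Suc n))" for n
  have SH: "\<forall>n. S n \<in> H" using QH S_def by simp
  have inv: "\<exists>M. \<forall>n\<ge>M. 1 / real (Suc n) < \<eta>" if "\<eta> > 0" for \<eta> :: real
  proof -
    obtain M :: nat where M: "1 / \<eta> < real M" using reals_Archimedean2 by blast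
    have "1 / real (Suc n) < \<eta>" if "n \<ge> M" for n
    proof -
      have "1 / \<eta> < real (Suc n)" using M that by simp
      then show ?thesis using \<open>\<eta> > 0\<close> by (simp add: field_simps)
    qed
    then show ?thesis by blast
  qed
  have "\<forall>\<epsilon>>0. \<exists>M. \<forall>m\<ge>M. \<forall>n\<ge>M. rnorm ip (\<lambda>x. S m x - S n x) < \<epsilon>"
  proof (intro allI impI)
    fix \<epsilon> :: real assume ep: "\<epsilon> > 0"
    obtain \<eta> where \<eta>: "\<eta> > 0" "\<And>s t. s \<noteq> 0 \<Longrightarrow> t \<noteq> 0 \<Longrightarrow> \<bar>s\<bar> < \<eta> \<Longrightarrow> \<bar>t\<bar> < \<eta> \<Longrightarrow>
     ip (\<lambda>x. Qf \<theta> e s x - Qf \<theta> e t x) (\<lambda>x. Qf \<theta> e s x - Qf \<theta> e t x) < \<epsilon>^2"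
      using cauchyQ[OF ne, of "\<epsilon>^2" \<theta>] ep by auto
    obtain M where M: "\<forall>n\<ge>M. 1 / real (Suc n) < \<eta>" using inv[OF \<eta>(1)] by blast
    have "rnorm ip (\<lambda>x. S m x - S n x) < \<epsilon>" if "m \<ge> M" "n \<ge> M" for m n
    proof -
      have "ip (\<lambda>x. S m x - S n x) (\<lambda>x. S m x - S n x) < \<epsilon>^2"
        unfolding S_def using \<eta>(2) M that by simp
      then show ?thesis unfolding rnorm_def using ep
        by (metis abs_of_pos real_sqrt_abs real_sqrt_less_iff)
    qed
    then show "\<exists>M. \<forall>m\<ge>M. \<forall>n\<ge>M. rnorm ip (\<lambda>x. S m x - S n x) < \<epsilon>" by blast
  qed
  then obtain l where lH: "l \<in> H" and lim: "(\<lambda>n. rnorm ip (\<lambda>x. S n x - l x)) \<longlonglongrightarrow> 0"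
    using complete[OF SH] by blast
  have lim2: "(\<lambda>n. ip (\<lambda>x. S n x - l x) (\<lambda>x. S n x - l x)) \<longlonglongrightarrow> 0"
  proof -
    have "(\<lambda>n. (rnorm ip (\<lambda>x. S n x - l x))^2) \<longlonglongrightarrow> 0^2" by (intro tendsto_power lim)
    moreover have "(rnorm ip (\<lambda>x. S n x - l x))^2 = ip (\<lambda>x. S n x - l x) (\<lambda>x. S n x - l x)" for n
      using rnorm_sq diffH SH lH by blast
    ultimately show ?thesis by simp
  qed
  have close: "\<exists>\<eta>>0. \<forall>t. t \<noteq> 0 \<longrightarrow> \<bar>t\<bar> < \<eta> \<longrightarrow>
     ip (\<lambda>x. Qf \<theta> e t x - l x) (\<lambda>x. Qf \<theta> e t x - l x) < \<rho>" if rho: "\<rho> > 0" for \<rho>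
  proof -
    obtain \<eta> where \<eta>: "\<eta> > 0" "\<And>s t. s \<noteq> 0 \<Longrightarrow> t \<noteq> 0 \<Longrightarrow> \<bar>s\<bar> < \<eta> \<Longrightarrow> \<bar>t\<bar> < \<eta> \<Longrightarrow>
     ip (\<lambda>x. Qf \<theta> e s x - Qf \<theta> e t x) (\<lambda>x. Qf \<theta> e s x - Qf \<theta> e t x) < \<rho>/4"
      using cauchyQ[OF ne, of "\<rho>/4" \<theta>] rho by auto
    obtain M1 where M1: "\<forall>n\<ge>M1. 1 / real (Suc n) < \<eta>" using inv[OF \<eta>(1)] by blast
    have "eventually (\<lambda>n. ip (\<lambda>x. S n x - l x) (\<lambda>x. S n x - l x) < \<rho>/4) sequentially"
      using order_tendstoD(2)[OF lim2, of "\<rho>/4"] rho by simp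
    then obtain M2 where M2: "\<forall>n\<ge>M2. ip (\<lambda>x. S n x - l x) (\<lambda>x. S n x - l x) < \<rho>/4"
      unfolding eventually_sequentially by blast
    define n where "n = max M1 M2"
    have n1: "1 / real (Suc n) < \<eta>" and n2: "ip (\<lambda>x. S n x - l x) (\<lambda>x. S n x - l x) < \<rho>/4"
      using M1 M2 n_def by auto
    show ?thesis
    proof (intro exI[of _ \<eta>] conjI allI impI)
      show "\<eta> > 0" by fact
      fix t :: real assume t: "t \<noteq> 0" "\<bar>t\<bar> < \<eta>"
      have "ip (\<lambda>x. Qf \<theta> e t x - l x) (\<lambda>x. Qf \<theta> e t x - l x) \<le>
         2 * ip (\<lambda>x. Qf \<theta> e t x - S n x) (\<lambda>x. Qf \<theta> e t x - S n x) + 2 * ip (\<lambda>x. S n x - l x) (\<lambda>x. S n x - l x)"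
        by (rule ip_sq_le[OF QH SH[rule_format] lH])
      also have "\<dots> < \<rho>"
        using \<eta>(2)[of t "1 / real (Suc n)"] t n1 n2 unfolding S_def by simp
      finally show "ip (\<lambda>x. Qf \<theta> e t x - l x) (\<lambda>x. Qf \<theta> e t x - l x) < \<rho>" .
    qed
  qed
  have "DERIV (\<lambda>\<tau>. g (\<theta> + \<tau> *\<^sub>R e)) 0 :> ip g l" if gH: "g \<in> H" for g
  proof -
    have "((\<lambda>y. (g (\<theta> + y *\<^sub>R e) - g (\<theta> + 0 *\<^sub>R e)) / (y - 0)) \<midarrow>0\<rightarrow> ip g l)"
      unfolding LIM_eq
    proof (intro allI impI)
      fix r :: real assume r: "r > 0"
      define \<rho> where "\<rho> = r^2 / (ip g g + 1)"
      have gp: "ip g g \<ge> 0" using ip_pos gH by simp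
      have rho: "\<rho> > 0" using r gp by (simp add: \<rho>_def)
      obtain \<eta> where \<eta>: "\<eta> > 0" "\<And>t. t \<noteq> 0 \<Longrightarrow> \<bar>t\<bar> < \<eta> \<Longrightarrow>
        ip (\<lambda>x. Qf \<theta> e t x - l x) (\<lambda>x. Qf \<theta> e t x - l x) < \<rho>" using close[OF rho] by blast
      have "norm ((g (\<theta> + x *\<^sub>R e) - g (\<theta> + 0 *\<^sub>R e)) / (x - 0) - ip g l) < r"
        if x: "x \<noteq> 0" "norm (x - 0) < \<eta>" for x
      proof -
        have dH: "(\<lambda>y. Qf \<theta> e x y - l y) \<in> H" using diffH[OF QH lH] .
        have eq: "(g (\<theta> + x *\<^sub>R e) - g (\<theta> + 0 *\<^sub>R e)) / (x - 0) - ip g l = ip g (\<lambda>y. Qf \<theta> e x y - l y)"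
          using ipQ[OF gH, of \<theta> e x] ip_diff_r[OF QH lH gH] by simp
        have "(ip g (\<lambda>y. Qf \<theta> e x y - l y))^2 \<le> ip g g * ip (\<lambda>y. Qf \<theta> e x y - l y) (\<lambda>y. Qf \<theta> e x y - l y)"
          by (rule cs[OF gH dH])
        also have "\<dots> \<le> ip g g * \<rho>"
          using \<eta>(2)[of x] x gp by (intro mult_left_mono) auto
        also have "\<dots> < r^2"
          using gp r unfolding \<rho>_def by (simp add: field_simps)
        finally have "(ip g (\<lambda>y. Qf \<theta> e x y - l y))^2 < r^2" .
        then have "\<bar>ip g (\<lambda>y. Qf \<theta> e x y - l y)\<bar> < r" using r
          by (metis abs_power2 power2_abs power_less_imp_less_base abs_ge_zero less_imp_le)
        then show ?thesis using eq by simp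
      qed
      then show "\<exists>s>0. \<forall>x. x \<noteq> 0 \<and> norm (x - 0) < s \<longrightarrow>
          norm ((g (\<theta> + x *\<^sub>R e) - g (\<theta> + 0 *\<^sub>R e)) / (x - 0) - ip g l) < r"
        using \<eta>(1) by blast
    qed
    then show ?thesis unfolding has_field_derivative_iff by simp
  qed
  then show ?thesis using lH by blast
qed

lemma grad_repr:
  "(\<lambda>x. pd1 k j \<theta> x) \<in> H \<and> (\<forall>g\<in>H. grad g \<theta> $ j = ip g (\<lambda>x. pd1 k j \<theta> x))"
proof -
  obtain l where lH: "l \<in> H" and d: "\<forall>g\<in>H. DERIV (\<lambda>\<tau>. g (\<theta> + \<tau> *\<^sub>R axis j 1)) 0 :> ip g l"
    using deriv_repr[of "axis j (1::real)" \<theta>] by auto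
  have "pd1 k j \<theta> x = l x" for x
  proof -
    have "DERIV (\<lambda>\<tau>. k (\<theta> + \<tau> *\<^sub>R axis j 1) x) 0 :> ip (\<lambda>y. k y x) l"
      using d kH[of x] by auto
    then have "pd1 k j \<theta> x = ip (\<lambda>y. k y x) l" unfolding pd1_def using DERIV_imp_deriv by blast
    also have "\<dots> = l x" using ip_sym[OF kH lH] repr[OF lH] by simp
    finally show ?thesis .
  qed
  then have el: "(\<lambda>x. pd1 k j \<theta> x) = l" by auto
  show ?thesis unfolding el using lH d by (auto simp: grad_def intro: DERIV_imp_deriv)
qed

end



lemma sum_swap_lc: "(\<Sum>j<m. c j * (\<Sum>q\<in>I. B j q * r q x)) = (\<Sum>q\<in>I. (\<Sum>j<m. c j * B j q) * (r q x :: real))"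
  by (simp add: sum_distrib_left sum_distrib_right mult.assoc sum.swap[of _ "{..<m}" I])

context rk begin

lemma ortho_coef:
  fixes m :: nat
  assumes eH: "\<forall>j<m. e j \<in> H" and on: "\<forall>j<m. \<forall>j'<m. ip (e j) (e j') = (if j = j' then 1 else 0)"
    and j: "j < m"
  shows "ip (\<lambda>x. \<Sum>j'<m. c j' * e j' x) (e j) = c j"
proof -
  have "ip (\<lambda>x. \<Sum>j'<m. c j' * e j' x) (e j) = (\<Sum>j'<m. c j' * ip (e j') (e j))"
    using ip_sum[OF finite_lessThan, of m e "e j" c] eH j by simp
  also have "\<dots> = (\<Sum>j'<m. if j' = j then c j' else 0)"
    using on j by (intro sum.cong) auto
  also have "\<dots> = c j" using j by (simp add: sum.delta)
  finally show ?thesis .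
qed

lemma ortho_ip:
  fixes m :: nat
  assumes eH: "\<forall>j<m. e j \<in> H" and on: "\<forall>j<m. \<forall>j'<m. ip (e j) (e j') = (if j = j' then 1 else 0)"
  shows "ip (\<lambda>x. \<Sum>j<m. c j * e j x) (\<lambda>x. \<Sum>j<m. d j * e j x) = (\<Sum>j<m. c j * d j)"
proof -
  have sH: "(\<lambda>x. \<Sum>j<m. c j * e j x) \<in> H" using sumH[OF finite_lessThan, of m e c] eH by simp
  have "ip (\<lambda>x. \<Sum>j<m. c j * e j x) (\<lambda>x. \<Sum>j<m. d j * e j x) = (\<Sum>j<m. d j * ip (\<lambda>x. \<Sum>j<m. c j * e j x) (e j))"
    using ip_sum_r[OF finite_lessThan, of m e _ d] eH sH by simp
  also have "\<dots> = (\<Sum>j<m. d j * c j)"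
    using ortho_coef[OF eH on] by (intro sum.cong) auto
  finally show ?thesis by (simp add: mult.commute)
qed

lemma GS:
  assumes "finite I" "\<forall>q\<in>I. r q \<in> H"
  shows "\<exists>(m::nat) e. (\<forall>j<m. e j \<in> H) \<and> (\<forall>j<m. \<forall>j'<m. ip (e j) (e j') = (if j = j' then 1 else 0)) \<and>
     (\<forall>q\<in>I. \<exists>c. r q = (\<lambda>x. \<Sum>j<m. c j * e j x)) \<and>
     (\<forall>j<m. \<exists>\<beta>. e j = (\<lambda>x. \<Sum>q\<in>I. \<beta> q * r q x))"
  using assms
proof (induction I rule: finite_induct)
  case empty
  show ?case by (rule exI[of _ "0::nat"], rule exI[of _ "\<lambda>j x. 0"]) auto
next
  case (insert a I)
  obtain m :: nat and e where eH: "\<forall>j<m. e j \<in> H"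
    and on: "\<forall>j<m. \<forall>j'<m. ip (e j) (e j') = (if j = j' then 1 else 0)"
    and sp: "\<forall>q\<in>I. \<exists>c. r q = (\<lambda>x. \<Sum>j<m. c j * e j x)"
    and sp2: "\<forall>j<m. \<exists>\<beta>. e j = (\<lambda>x. \<Sum>q\<in>I. \<beta> q * r q x)"
    using insert by auto
  have "\<forall>j. \<exists>\<beta>. j < m \<longrightarrow> e j = (\<lambda>x. \<Sum>q\<in>I. \<beta> q * r q x)" using sp2 by blast
  then obtain B where B: "\<forall>j. j < m \<longrightarrow> e j = (\<lambda>x. \<Sum>q\<in>I. B j q * r q x)"
    using choice[of "\<lambda>j \<beta>. j < m \<longrightarrow> e j = (\<lambda>x. \<Sum>q\<in>I. \<beta> q * r q x)"] by blast
  have raH: "r a \<in> H" using insert by simp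
  define c0 where "c0 j = ip (r a) (e j)" for j
  define r' where "r' = (\<lambda>x. r a x - (\<Sum>j<m. c0 j * e j x))"
  have sH: "(\<lambda>x. \<Sum>j<m. c0 j * e j x) \<in> H" using sumH[OF finite_lessThan, of m e c0] eH by simp
  have r'H: "r' \<in> H" unfolding r'_def using diffH[OF raH sH] .
  have orth: "ip r' (e j) = 0" if "j < m" for j
    unfolding r'_def using ip_diff[OF raH sH eH[rule_format, OF that]] ortho_coef[OF eH on that, of c0]
    by (simp add: c0_def)
  have ext0: "e j = (\<lambda>x. \<Sum>q\<in>insert a I. ((B j)(a := 0)) q * r q x)" if "j < m" for j
  proof -
    have "(\<Sum>q\<in>insert a I. ((B j)(a := 0)) q * r q x) = (\<Sum>q\<in>I. B j q * r q x)" for x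
      using insert(1,2) by (simp add: sum.insert) (intro sum.cong, auto)
    then show ?thesis using B that by auto
  qed
  show ?case
  proof (cases "ip r' r' = 0")
    case True
    then have r0: "r' = (\<lambda>x. 0)" using ip_def0 r'H by blast
    have "r a = (\<lambda>x. \<Sum>j<m. c0 j * e j x)"
    proof
      fix x show "r a x = (\<Sum>j<m. c0 j * e j x)" using fun_cong[OF r0, of x] by (simp add: r'_def)
    qed
    then show ?thesis using eH on sp ext0
      by (intro exI[of _ m] exI[of _ e]) blast
  next
    case False
    define nr where "nr = sqrt (ip r' r')"
    have nrp: "nr > 0" using False ip_pos[OF r'H] by (simp add: nr_def)
    have nr2: "nr * nr = ip r' r'" using ip_pos[OF r'H] by (simp add: nr_def)
    define e' where "e' = e(m := (\<lambda>x. r' x / nr))"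
    have e'H: "\<forall>j<Suc m. e' j \<in> H" using eH divH[OF r'H] by (auto simp: e'_def less_Suc_eq)
    have mm: "ip (e' m) (e' m) = 1"
      using ip_divide[OF r'H divH[OF r'H]] ip_divide[OF r'H r'H] ip_sym[OF r'H divH[OF r'H]] nrp nr2 False
      by (simp add: e'_def)
    have mj: "ip (e' m) (e j) = 0" if "j < m" for j
      using ip_divide[OF r'H eH[rule_format, OF that]] orth[OF that] by (simp add: e'_def)
    have on': "\<forall>j<Suc m. \<forall>j'<Suc m. ip (e' j) (e' j') = (if j = j' then 1 else 0)"
    proof (intro allI impI)
      fix j j' assume jj: "j < Suc m" "j' < Suc m"
      show "ip (e' j) (e' j') = (if j = j' then 1 else 0)"
      proof (cases "j = m"; cases "j' = m")
        assume "j = m" "j' = m" then show ?thesis using mm by simp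
      next
        assume "j = m" "j' \<noteq> m" then show ?thesis using mj[of j'] jj by (simp add: e'_def)
      next
        assume "j \<noteq> m" "j' = m" then show ?thesis using mj[of j] jj
          ip_sym[OF eH[rule_format, of j] e'H[rule_format, of m]] by (simp add: e'_def)
      next
        assume "j \<noteq> m" "j' \<noteq> m" then show ?thesis using on jj by (simp add: e'_def)
      qed
    qed
    have spI: "\<exists>c. r q = (\<lambda>x. \<Sum>j<Suc m. c j * e' j x)" if "q \<in> insert a I" for q
    proof (cases "q = a")
      case True
      have "r a = (\<lambda>x. \<Sum>j<Suc m. (c0(m := nr)) j * e' j x)"
      proof
        fix x
        have "(\<Sum>j<Suc m. (c0(m := nr)) j * e' j x) = (\<Sum>j<m. c0 j * e j x) + nr * (r' x / nr)"
          by (simp add: e'_def)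
        also have "\<dots> = r a x" using nrp by (simp add: r'_def)
        finally show "r a x = (\<Sum>j<Suc m. (c0(m := nr)) j * e' j x)" by simp
      qed
      then show ?thesis using True by blast
    next
      case False
      then have "q \<in> I" using that by simp
      then obtain c where c: "r q = (\<lambda>x. \<Sum>j<m. c j * e j x)" using sp by blast
      have "r q = (\<lambda>x. \<Sum>j<Suc m. (c(m := 0)) j * e' j x)"
        unfolding c by (simp add: e'_def)
      then show ?thesis by blast
    qed
    have sp2': "\<exists>\<beta>. e' j = (\<lambda>x. \<Sum>q\<in>insert a I. \<beta> q * r q x)" if "j < Suc m" for j
    proof (cases "j = m")
      case False
      then have jm: "j < m" using that by simp
      have "e' j = (\<lambda>x. \<Sum>q\<in>insert a I. ((B j)(a := 0)) q * r q x)"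
        using ext0[OF jm] False unfolding e'_def by simp
      then show ?thesis by blast
    next
      case True
      define \<gamma> where "\<gamma> = (\<lambda>q. - (\<Sum>j<m. c0 j * B j q) / nr)(a := 1 / nr)"
      have "e' m = (\<lambda>x. \<Sum>q\<in>insert a I. \<gamma> q * r q x)"
      proof
        fix x
        have "(\<Sum>q\<in>insert a I. \<gamma> q * r q x) = r a x / nr + (\<Sum>q\<in>I. - (\<Sum>j<m. c0 j * B j q) / nr * r q x)"
          using insert(1,2) by (simp add: sum.insert \<gamma>_def) (intro sum.cong, auto)
        also have "(\<Sum>q\<in>I. - (\<Sum>j<m. c0 j * B j q) / nr * r q x) = - (\<Sum>q\<in>I. (\<Sum>j<m. c0 j * B j q) * r q x) / nr"
        proof -
          have "(\<Sum>q\<in>I. - (\<Sum>j<m. c0 j * B j q) / nr * r q x) = (\<Sum>q\<in>I. (-1/nr) * ((\<Sum>j<m. c0 j * B j q) * r q x))"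
            by (intro sum.cong) auto
          also have "\<dots> = (-1/nr) * (\<Sum>q\<in>I. (\<Sum>j<m. c0 j * B j q) * r q x)" by (rule sum_distrib_left[symmetric])
          finally show ?thesis by simp
        qed
        also have "(\<Sum>q\<in>I. (\<Sum>j<m. c0 j * B j q) * r q x) = (\<Sum>j<m. c0 j * (\<Sum>q\<in>I. B j q * r q x))"
          by (rule sum_swap_lc[symmetric])
        also have "\<dots> = (\<Sum>j<m. c0 j * e j x)" using B by (intro sum.cong) auto
        finally have "(\<Sum>q\<in>insert a I. \<gamma> q * r q x) = r' x / nr" by (simp add: r'_def diff_divide_distrib)
        then show "e' m x = (\<Sum>q\<in>insert a I. \<gamma> q * r q x)" by (simp add: e'_def)
      qed
      then show ?thesis using True by blast
    qed
    show ?thesis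
      by (intro exI[of _ "Suc m"] exI[of _ e'] conjI e'H on' ballI allI impI spI sp2')
  qed
qed

end



lemma compact_box: "compact (Pi UNIV (\<lambda>j::nat. if j < m then {-G..G} else {0::real}))"
proof -
  have "compactin (product_topology (\<lambda>i. euclidean) UNIV) (PiE UNIV (\<lambda>j::nat. if j < m then {-G..G} else {0::real}))"
    by (subst compactin_PiE) auto
  then show ?thesis by (simp add: euclidean_product_topology PiE_UNIV_domain)
qed

lemma cont_lin: "continuous_on UNIV (\<lambda>c::nat \<Rightarrow> real. \<Sum>j<m. c j * a j)"
  by (intro continuous_intros continuous_on_product_coordinates)

lemma cont_sq: "continuous_on UNIV (\<lambda>c::nat \<Rightarrow> real. \<Sum>j<m. (c j)^2)"
  by (intro continuous_intros continuous_on_product_coordinates)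

context rk begin

lemma attain:
  fixes I :: "'i set" and r :: "'i \<Rightarrow> real^'n \<Rightarrow> real" and dat :: "nat \<Rightarrow> 'i" and cw :: "'i \<Rightarrow> real"
  assumes fin: "finite I" and rH: "\<forall>q\<in>I. r q \<in> H"
    and dat: "\<forall>i<Nk. dat i \<in> I \<and> r (dat i) = (\<lambda>x. k x (th i))"
    and fH: "f \<in> H" and fn: "ip f f \<le> \<Gamma>^2" and fd: "\<forall>i<Nk. \<bar>f (th i) - yt i\<bar> \<le> \<delta>"
    and G: "\<Gamma> \<ge> 0"
  shows "\<exists>\<beta> g. g = (\<lambda>x. \<Sum>q\<in>I. \<beta> q * r q x) \<and> ip g g \<le> \<Gamma>^2 \<and> (\<forall>i<Nk. \<bar>g (th i) - yt i\<bar> \<le> \<delta>) \<and>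
     (\<forall>g'\<in>H. ip g' g' \<le> \<Gamma>^2 \<and> (\<forall>i<Nk. \<bar>g' (th i) - yt i\<bar> \<le> \<delta>) \<longrightarrow>
        (\<Sum>q\<in>I. cw q * ip (r q) g) \<le> (\<Sum>q\<in>I. cw q * ip (r q) g'))"
proof -
  obtain m :: nat and e where eH: "\<forall>j<m. e j \<in> H"
    and on: "\<forall>j<m. \<forall>j'<m. ip (e j) (e j') = (if j = j' then 1 else 0)"
    and sp: "\<forall>q\<in>I. \<exists>c. r q = (\<lambda>x. \<Sum>j<m. c j * e j x)"
    and sp2: "\<forall>j<m. \<exists>\<beta>. e j = (\<lambda>x. \<Sum>q\<in>I. \<beta> q * r q x)"
    using GS[OF fin rH] by blast
  have "\<forall>j. \<exists>\<beta>. j < m \<longrightarrow> e j = (\<lambda>x. \<Sum>q\<in>I. \<beta> q * r q x)" using sp2 by blast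
  then obtain B where B: "\<forall>j. j < m \<longrightarrow> e j = (\<lambda>x. \<Sum>q\<in>I. B j q * r q x)"
    using choice[of "\<lambda>j \<beta>. j < m \<longrightarrow> e j = (\<lambda>x. \<Sum>q\<in>I. \<beta> q * r q x)"] by blast
  define E where "E c = (\<lambda>x. \<Sum>j<m. c j * e j x)" for c
  have EH: "E c \<in> H" for c unfolding E_def using sumH[OF finite_lessThan, of m e c] eH by simp
  define cf where "cf g = (\<lambda>j. if j < m then ip g (e j) else 0)" for g
  have Ecf: "E (cf g) = (\<lambda>x. \<Sum>j<m. ip g (e j) * e j x)" for g
    unfolding E_def cf_def by (intro ext sum.cong) auto
  have perp: "ip (\<lambda>x. g x - E (cf g) x) (e j) = 0" if gH: "g \<in> H" and j: "j < m" for g j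
    using ip_diff[OF gH EH eH[rule_format, OF j], of "cf g"] ortho_coef[OF eH on j, of "cf g"] j
    unfolding E_def cf_def by simp
  have perpv: "ip (\<lambda>x. g x - E (cf g) x) (E d) = 0" if gH: "g \<in> H" for g d
  proof -
    have "ip (\<lambda>x. g x - E (cf g) x) (E d) = (\<Sum>j<m. d j * ip (\<lambda>x. g x - E (cf g) x) (e j))"
      unfolding E_def[of d] using ip_sum_r[OF finite_lessThan, of m e "\<lambda>x. g x - E (cf g) x" d] eH diffH[OF gH EH]
      by simp
    also have "\<dots> = 0" using perp[OF gH] by simp
    finally show ?thesis .
  qed
  have perpr: "ip (r q) g = ip (r q) (E (cf g))" if gH: "g \<in> H" and q: "q \<in> I" for g q
  proof -
    obtain c where c: "r q = E c" using sp q unfolding E_def by blast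
    have "ip (r q) (\<lambda>x. g x - E (cf g) x) = 0"
      using perpv[OF gH, of c] ip_sym[OF EH diffH[OF gH EH]] c by simp
    then show ?thesis using ip_diff_r[OF gH EH, of "r q" "cf g"] rH q by simp
  qed
  have pdata: "E (cf g) (th i) = g (th i)" if gH: "g \<in> H" and i: "i < Nk" for g i
  proof -
    have "ip (\<lambda>x. g x - E (cf g) x) (r (dat i)) = 0"
      using perpr[OF gH, of "dat i"] ip_diff_r[OF gH EH, of "r (dat i)" "cf g"] dat i rH
        ip_sym[OF diffH[OF gH EH]] by (metis diff_self)
    then show ?thesis using repr[OF diffH[OF gH EH], of "cf g" "th i"] dat i by simp
  qed
  have pnorm: "ip (E c) (E c) = (\<Sum>j<m. (c j)^2)" for c
    unfolding E_def using ortho_ip[OF eH on, of c c] by (simp add: power2_eq_square)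
  have ple: "ip (E (cf g)) (E (cf g)) \<le> ip g g" if gH: "g \<in> H" for g
  proof -
    have a: "ip (\<lambda>x. g x - E (cf g) x) (E (cf g)) = 0" by (rule perpv[OF gH])
    then have b: "ip g (E (cf g)) = ip (E (cf g)) (E (cf g))" using ip_diff[OF gH EH EH] by simp
    have "0 \<le> ip (\<lambda>x. g x - E (cf g) x) (\<lambda>x. g x - E (cf g) x)" using ip_pos diffH[OF gH EH] by blast
    then show ?thesis using ip_sq[OF gH EH, of "cf g"] b by simp
  qed
  define S where "S = Pi UNIV (\<lambda>j::nat. if j < m then {-\<Gamma>..\<Gamma>} else {0::real})"
  define C where "C = S \<inter> ({c. (\<Sum>j<m. (c j)^2) \<le> \<Gamma>^2} \<inter> (\<Inter>i\<in>{..<Nk}. {c. \<bar>(\<Sum>j<m. c j * e j (th i)) - yt i\<bar> \<le> \<delta>}))"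
  have cC: "closed ({c. (\<Sum>j<m. (c j)^2) \<le> \<Gamma>^2} \<inter> (\<Inter>i\<in>{..<Nk}. {c::nat\<Rightarrow>real. \<bar>(\<Sum>j<m. c j * e j (th i)) - yt i\<bar> \<le> \<delta>}))"
  proof (intro closed_Int closed_INT ballI)
    show "closed {c::nat\<Rightarrow>real. (\<Sum>j<m. (c j)^2) \<le> \<Gamma>^2}"
      by (rule closed_Collect_le[OF cont_sq continuous_on_const])
    fix i show "closed {c::nat\<Rightarrow>real. \<bar>(\<Sum>j<m. c j * e j (th i)) - yt i\<bar> \<le> \<delta>}"
      by (intro closed_Collect_le continuous_intros cont_lin)
  qed
  have Ccomp: "compact C" unfolding C_def S_def using compact_box cC by blast
  have cfC: "cf g \<in> C" if gH: "g \<in> H" and gn: "ip g g \<le> \<Gamma>^2" and gd: "\<forall>i<Nk. \<bar>g (th i) - yt i\<bar> \<le> \<delta>" for g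
  proof -
    have sq: "(\<Sum>j<m. (cf g j)^2) \<le> \<Gamma>^2" using pnorm[of "cf g"] ple[OF gH] gn by simp
    have "cf g \<in> S"
    proof -
      have "\<bar>cf g j\<bar> \<le> \<Gamma>" if j: "j < m" for j
      proof -
        have "(cf g j)^2 \<le> (\<Sum>j<m. (cf g j)^2)" using j by (intro member_le_sum) auto
        then show ?thesis using sq G power2_le_iff_abs_le by fastforce
      qed
      then show ?thesis unfolding S_def by (force simp: cf_def abs_le_iff)
    qed
    moreover have "\<forall>i<Nk. \<bar>(\<Sum>j<m. cf g j * e j (th i)) - yt i\<bar> \<le> \<delta>"
      using pdata[OF gH] gd unfolding E_def by simp
    ultimately show ?thesis unfolding C_def using sq by auto
  qed
  define a where "a j = (\<Sum>q\<in>I. cw q * ip (r q) (e j))" for j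
  have objE: "(\<Sum>q\<in>I. cw q * ip (r q) (E c)) = (\<Sum>j<m. c j * a j)" for c
  proof -
    have "(\<Sum>q\<in>I. cw q * ip (r q) (E c)) = (\<Sum>q\<in>I. cw q * (\<Sum>j<m. c j * ip (r q) (e j)))"
      unfolding E_def using ip_sum_r[OF finite_lessThan, of m e _ c] eH rH by (intro sum.cong) auto
    also have "\<dots> = (\<Sum>j<m. c j * a j)"
      unfolding a_def by (simp add: sum_distrib_left mult.assoc mult.left_commute sum.swap[of _ I])
    finally show ?thesis .
  qed
  have Cne: "C \<noteq> {}" using cfC[OF fH fn fd] by blast
  obtain cs where csC: "cs \<in> C" and csmin: "\<forall>c\<in>C. (\<Sum>j<m. cs j * a j) \<le> (\<Sum>j<m. c j * a j)"
    using continuous_attains_inf[OF Ccomp Cne continuous_on_subset[OF cont_lin[of a m]]] by blast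
  define \<beta> where "\<beta> q = (\<Sum>j<m. cs j * B j q)" for q
  have gs: "E cs = (\<lambda>x. \<Sum>q\<in>I. \<beta> q * r q x)"
  proof
    fix x
    have "E cs x = (\<Sum>j<m. cs j * (\<Sum>q\<in>I. B j q * r q x))" unfolding E_def using B by (intro sum.cong) auto
    also have "\<dots> = (\<Sum>q\<in>I. \<beta> q * r q x)" unfolding \<beta>_def by (rule sum_swap_lc)
    finally show "E cs x = (\<Sum>q\<in>I. \<beta> q * r q x)" .
  qed
  show ?thesis
  proof (intro exI[of _ \<beta>] exI[of _ "E cs"] conjI gs ballI impI allI)
    show "ip (E cs) (E cs) \<le> \<Gamma>^2" using csC pnorm unfolding C_def by simp
    show "\<bar>E cs (th i) - yt i\<bar> \<le> \<delta>" if "i < Nk" for i using csC that unfolding C_def E_def by simp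
    fix g' assume g'H: "g' \<in> H" and g': "ip g' g' \<le> \<Gamma>^2 \<and> (\<forall>i<Nk. \<bar>g' (th i) - yt i\<bar> \<le> \<delta>)"
    have "(\<Sum>q\<in>I. cw q * ip (r q) g') = (\<Sum>q\<in>I. cw q * ip (r q) (E (cf g')))"
      using perpr[OF g'H] by (intro sum.cong) auto
    also have "\<dots> = (\<Sum>j<m. cf g' j * a j)" by (rule objE)
    finally show "(\<Sum>q\<in>I. cw q * ip (r q) (E cs)) \<le> (\<Sum>q\<in>I. cw q * ip (r q) g')"
      using objE[of cs] csmin cfC[OF g'H] g' by simp
  qed
qed

end



lemma sum_idx1: "finite (idx1_set Nk :: ('n::finite) idx1 set) \<and>
  (\<Sum>p\<in>idx1_set Nk. \<phi> p) = (\<Sum>i<Nk. \<phi> (Dat i)) + (\<Sum>l\<in>(UNIV::'n set). \<phi> (Gr l))"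
proof -
  have d: "Dat ` {..<Nk} \<inter> range Gr = ({} :: 'n idx1 set)" by auto
  have "(\<Sum>p\<in>idx1_set Nk. \<phi> p) = (\<Sum>p\<in>Dat ` {..<Nk}. \<phi> p) + (\<Sum>p\<in>range Gr. \<phi> p)"
    unfolding idx1_set_def by (rule sum.union_disjoint) (auto simp: d)
  also have "\<dots> = (\<Sum>i<Nk. \<phi> (Dat i)) + (\<Sum>l\<in>(UNIV::'n set). \<phi> (Gr l))"
    by (simp add: sum.reindex inj_on_def)
  finally show ?thesis by (simp add: idx1_set_def)
qed

lemma sum_idx2: "finite (idx2_set Nk :: ('n::finite) idx2 set) \<and>
  (\<Sum>p\<in>idx2_set Nk. \<phi> p) = (\<Sum>i<Nk. \<phi> (Dat2 i)) + \<phi> Th + \<phi> ThP + (\<Sum>l\<in>(UNIV::'n set). \<phi> (Gr2 l))"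
proof -
  have fin: "finite (Dat2 ` {..<Nk} \<union> {Th, ThP} :: 'n idx2 set)" by simp
  have "(\<Sum>p\<in>idx2_set Nk. \<phi> p) = (\<Sum>p\<in>Dat2 ` {..<Nk} \<union> {Th, ThP}. \<phi> p) + (\<Sum>p\<in>range Gr2. \<phi> p)"
    unfolding idx2_set_def by (rule sum.union_disjoint) auto
  also have "(\<Sum>p\<in>Dat2 ` {..<Nk} \<union> {Th, ThP}. \<phi> p) = (\<Sum>p\<in>Dat2 ` {..<Nk}. \<phi> p) + (\<Sum>p\<in>{Th, ThP}. \<phi> p)"
    by (rule sum.union_disjoint) auto
  also have "\<dots> = (\<Sum>i<Nk. \<phi> (Dat2 i)) + \<phi> Th + \<phi> ThP"
    by (simp add: sum.reindex inj_on_def add.assoc)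
  also have "(\<Sum>p\<in>range Gr2. \<phi> p) = (\<Sum>l\<in>(UNIV::'n set). \<phi> (Gr2 l))"
    by (simp add: sum.reindex inj_on_def)
  finally show ?thesis by (simp add: idx2_set_def)
qed

context rk begin

lemma conv:
  assumes fin: "finite I" and rH: "\<forall>q\<in>I. r q \<in> H" and M: "\<forall>p q. M p q = ip (r p) (r q)"
  shows "quadf I M \<beta> = ip (\<lambda>x. \<Sum>q\<in>I. \<beta> q * r q x) (\<lambda>x. \<Sum>q\<in>I. \<beta> q * r q x)"
    and "p \<in> I \<Longrightarrow> mrow I M p \<beta> = ip (r p) (\<lambda>x. \<Sum>q\<in>I. \<beta> q * r q x)"
    and "linf I c M \<beta> = (\<Sum>p\<in>I. c p * ip (r p) (\<lambda>x. \<Sum>q\<in>I. \<beta> q * r q x))"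
proof -
  define g where "g = (\<lambda>x. \<Sum>q\<in>I. \<beta> q * r q x)"
  have gH: "g \<in> H" unfolding g_def using sumH[OF fin rH] .
  have mr: "mrow I M p \<beta> = ip (r p) g" if "r p \<in> H" for p
    unfolding mrow_def g_def using ip_sum_r[OF fin rH that, of \<beta>] M by (simp add: mult.commute)
  show "p \<in> I \<Longrightarrow> mrow I M p \<beta> = ip (r p) (\<lambda>x. \<Sum>q\<in>I. \<beta> q * r q x)"
    using mr rH g_def by blast
  show "linf I c M \<beta> = (\<Sum>p\<in>I. c p * ip (r p) (\<lambda>x. \<Sum>q\<in>I. \<beta> q * r q x))"
    unfolding linf_def using mr rH g_def by (intro sum.cong) auto
  have "ip g g = (\<Sum>p\<in>I. \<beta> p * ip (r p) g)"
    using ip_sum[OF fin rH gH, of \<beta>] unfolding g_def by simp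
  also have "\<dots> = (\<Sum>p\<in>I. \<beta> p * mrow I M p \<beta>)" using mr rH by (intro sum.cong) auto
  also have "\<dots> = quadf I M \<beta>"
    unfolding quadf_def mrow_def by (simp add: sum_distrib_left mult.assoc)
  finally show "quadf I M \<beta> = ip (\<lambda>x. \<Sum>q\<in>I. \<beta> q * r q x) (\<lambda>x. \<Sum>q\<in>I. \<beta> q * r q x)"
    unfolding g_def by simp
qed

lemma ipkk: "ip (\<lambda>x. k x a) (\<lambda>x. k x b) = k a b"
  using repr[OF kH, of a b] ksym by simp

end

context rkk begin

lemma hH: "(\<lambda>x. pd1 k l \<theta> x) \<in> H" using grad_repr by blast

lemma iphk: "ip (\<lambda>x. pd1 k l \<theta> x) (\<lambda>x. k x a) = pd1 k l \<theta> a"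
  using repr[OF hH] .

lemma ipkh: "ip (\<lambda>x. k x a) (\<lambda>x. pd1 k l \<theta> x) = pd1 k l \<theta> a"
  using iphk ip_sym[OF hH kH] by metis

lemma iphh: "ip (\<lambda>x. pd1 k l \<theta> x) (\<lambda>x. pd1 k l' \<theta> x) = pd12 k l l' \<theta> \<theta>"
  using grad_repr[of l' \<theta>] hH[of l \<theta>] by (simp add: grad_def pd12_def)

lemma grad_ip: "g \<in> H \<Longrightarrow> grad g \<theta> $ l = ip (\<lambda>x. pd1 k l \<theta> x) g"
  using grad_repr[of l \<theta>] ip_sym[OF hH] by metis

end




theorem theorem1:
  fixes k :: "real^'n \<Rightarrow> real^'n \<Rightarrow> real"
    and H :: "(real^'n \<Rightarrow> real) set"
    and ip :: "(real^'n \<Rightarrow> real) \<Rightarrow> (real^'n \<Rightarrow> real) \<Rightarrow> real"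
    and Nk :: nat and th :: "nat \<Rightarrow> real^'n" and yt :: "nat \<Rightarrow> real"
    and \<delta> \<Gamma> :: real and f mk :: "real^'n \<Rightarrow> real" and \<theta> :: "real^'n"
  assumes kern: "is_kernel k"
    and rkhs: "is_RKHS k H ip"
    and delta: "\<delta> \<ge> 0" and Gamma: "\<Gamma> > 0"
    and fH: "f \<in> H" and f_norm: "rnorm ip f \<le> \<Gamma>"
    and f_data: "\<forall>i<Nk. \<bar>f (th i) - yt i\<bar> \<le> \<delta>"
    and mkH: "mk \<in> H"
    and mk_data: "\<forall>i<Nk. \<bar>mk (th i) - yt i\<bar> \<le> \<delta>"
    and mk_min: "\<forall>m\<in>H. (\<forall>i<Nk. \<bar>m (th i) - yt i\<bar> \<le> \<delta>) \<longrightarrow> (rnorm ip mk)\<^sup>2 \<le> (rnorm ip m)\<^sup>2"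
  defines "F \<equiv> {g \<in> H. (rnorm ip g)\<^sup>2 \<le> \<Gamma>\<^sup>2 \<and> (\<forall>i<Nk. \<bar>g (th i) - yt i\<bar> \<le> \<delta>)}"
  shows
    "(\<exists>v. (\<exists>\<beta>. socp1_feasible k th yt Nk \<delta> \<Gamma> \<theta> \<beta> \<and>
                linf (idx1_set Nk) (cost1 (grad mk \<theta>)) (Kfrak k th \<theta>) \<beta> = v) \<and>
          (\<forall>\<beta>. socp1_feasible k th yt Nk \<delta> \<Gamma> \<theta> \<beta> \<longrightarrow>
                v \<le> linf (idx1_set Nk) (cost1 (grad mk \<theta>)) (Kfrak k th \<theta>) \<beta>) \<and>
          (\<exists>g\<in>F. grad g \<theta> \<bullet> grad mk \<theta> = v) \<and>
          (\<forall>g\<in>F. v \<le> grad g \<theta> \<bullet> grad mk \<theta>) \<and>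
          v \<le> grad f \<theta> \<bullet> grad mk \<theta>)
     \<and>
     (\<forall>\<mu> c. \<mu> > 0 \<longrightarrow> 0 < c \<longrightarrow> c < 1 \<longrightarrow>
        (let \<theta>p = \<theta> - \<mu> *\<^sub>R grad mk \<theta> in
         \<exists>v. (\<exists>\<beta>. socp2_feasible k th yt Nk \<delta> \<Gamma> \<theta> \<theta>p \<beta> \<and>
                linf (idx2_set Nk) (cost2 c \<mu> (grad mk \<theta>)) (Kfrak2 k th \<theta> \<theta>p) \<beta> = v) \<and>
          (\<forall>\<beta>. socp2_feasible k th yt Nk \<delta> \<Gamma> \<theta> \<theta>p \<beta> \<longrightarrow>
                linf (idx2_set Nk) (cost2 c \<mu> (grad mk \<theta>)) (Kfrak2 k th \<theta> \<theta>p) \<beta> \<le> v) \<and>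
          (\<exists>g\<in>F. g \<theta>p - g \<theta> + c * \<mu> * (grad g \<theta> \<bullet> grad mk \<theta>) = v) \<and>
          (\<forall>g\<in>F. g \<theta>p - g \<theta> + c * \<mu> * (grad g \<theta> \<bullet> grad mk \<theta>) \<le> v) \<and>
          f \<theta>p - f \<theta> + c * \<mu> * (grad f \<theta> \<bullet> grad mk \<theta>) \<le> v))"
proof -
  interpret rkk k H ip
    using kern rkhs by unfold_locales (auto simp: is_kernel_def)
  have G0: "\<Gamma> \<ge> 0" using Gamma by simp
  have Fdef: "g \<in> F \<longleftrightarrow> g \<in> H \<and> ip g g \<le> \<Gamma>^2 \<and> (\<forall>i<Nk. \<bar>g (th i) - yt i\<bar> \<le> \<delta>)" for g
    unfolding F_def using rnorm_sq by auto
  have fn: "ip f f \<le> \<Gamma>^2"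
  proof -
    have "0 \<le> rnorm ip f" using ip_pos[OF fH] by (simp add: rnorm_def)
    then have "(rnorm ip f)^2 \<le> \<Gamma>^2" using f_norm by (intro power_mono) auto
    then show ?thesis using rnorm_sq[OF fH] by simp
  qed
  have fF: "f \<in> F" using Fdef fH fn f_data by blast
  have kdat: "ip (\<lambda>x. k x a) g = g a" if "g \<in> H" for g a
    using repr[OF that] ip_sym[OF that kH] by simp
  define r1 where "r1 p = (case p of Dat i \<Rightarrow> (\<lambda>x. k x (th i)) | Gr l \<Rightarrow> (\<lambda>x. pd1 k l \<theta> x))" for p
  have r1H: "r1 q \<in> H" for q by (cases q) (simp_all add: r1_def kH hH)
  have K1: "\<forall>p q. Kfrak k th \<theta> p q = ip (r1 p) (r1 q)"
  proof (intro allI)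
    fix p q show "Kfrak k th \<theta> p q = ip (r1 p) (r1 q)"
      by (cases p; cases q) (simp_all add: Kfrak_def r1_def ipkk ipkh iphk iphh)
  qed
  have fin1: "finite (idx1_set Nk :: 'n idx1 set)" using sum_idx1 by blast
  have r1H': "\<forall>q\<in>idx1_set Nk. r1 q \<in> H" using r1H by blast
  have dat1: "\<forall>i<Nk. Dat i \<in> idx1_set Nk \<and> r1 (Dat i) = (\<lambda>x. k x (th i))"
    by (simp add: idx1_set_def r1_def)
  have obj1: "(\<Sum>p\<in>idx1_set Nk. cost1 (grad mk \<theta>) p * ip (r1 p) g) = grad g \<theta> \<bullet> grad mk \<theta>" if gH: "g \<in> H" for g
  proof -
    have "(\<Sum>p\<in>idx1_set Nk. cost1 (grad mk \<theta>) p * ip (r1 p) g) = (\<Sum>l\<in>UNIV. grad mk \<theta> $ l * ip (\<lambda>x. pd1 k l \<theta> x) g)"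
      using sum_idx1[of Nk "\<lambda>p. cost1 (grad mk \<theta>) p * ip (r1 p) g"] by (simp add: cost1_def r1_def)
    also have "\<dots> = grad g \<theta> \<bullet> grad mk \<theta>"
      unfolding inner_vec_def using grad_ip[OF gH] by (intro sum.cong) (auto simp: mult.commute)
    finally show ?thesis .
  qed
  have feas1: "socp1_feasible k th yt Nk \<delta> \<Gamma> \<theta> \<beta> \<longleftrightarrow>
     ip (\<lambda>x. \<Sum>q\<in>idx1_set Nk. \<beta> q * r1 q x) (\<lambda>x. \<Sum>q\<in>idx1_set Nk. \<beta> q * r1 q x) \<le> \<Gamma>^2 \<and>
     (\<forall>i<Nk. \<bar>(\<lambda>x. \<Sum>q\<in>idx1_set Nk. \<beta> q * r1 q x) (th i) - yt i\<bar> \<le> \<delta>)" for \<beta>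
  proof -
    have m: "mrow (idx1_set Nk) (Kfrak k th \<theta>) (Dat i) \<beta> = (\<lambda>x. \<Sum>q\<in>idx1_set Nk. \<beta> q * r1 q x) (th i)" if "i < Nk" for i
    proof -
      have d: "Dat i \<in> idx1_set Nk" "r1 (Dat i) = (\<lambda>x. k x (th i))" using dat1 that by auto
      have "mrow (idx1_set Nk) (Kfrak k th \<theta>) (Dat i) \<beta> = ip (r1 (Dat i)) (\<lambda>x. \<Sum>q\<in>idx1_set Nk. \<beta> q * r1 q x)"
        by (rule conv(2)[OF fin1 r1H' K1 d(1)])
      also have "\<dots> = (\<lambda>x. \<Sum>q\<in>idx1_set Nk. \<beta> q * r1 q x) (th i)"
        unfolding d(2) by (rule kdat[OF sumH[OF fin1 r1H']])
      finally show ?thesis .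
    qed
    show ?thesis unfolding socp1_feasible_def conv(1)[OF fin1 r1H' K1] using m by auto
  qed
  have lin1: "linf (idx1_set Nk) (cost1 (grad mk \<theta>)) (Kfrak k th \<theta>) \<beta> =
      grad (\<lambda>x. \<Sum>q\<in>idx1_set Nk. \<beta> q * r1 q x) \<theta> \<bullet> grad mk \<theta>" for \<beta>
    using conv(3)[OF fin1 r1H' K1] obj1[OF sumH[OF fin1 r1H']] by simp
  obtain \<beta>1 g1 where g1: "g1 = (\<lambda>x. \<Sum>q\<in>idx1_set Nk. \<beta>1 q * r1 q x)" and g1n: "ip g1 g1 \<le> \<Gamma>^2"
    and g1d: "\<forall>i<Nk. \<bar>g1 (th i) - yt i\<bar> \<le> \<delta>"
    and g1o: "\<forall>g'\<in>H. ip g' g' \<le> \<Gamma>^2 \<and> (\<forall>i<Nk. \<bar>g' (th i) - yt i\<bar> \<le> \<delta>) \<longrightarrow>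
        (\<Sum>q\<in>idx1_set Nk. cost1 (grad mk \<theta>) q * ip (r1 q) g1) \<le> (\<Sum>q\<in>idx1_set Nk. cost1 (grad mk \<theta>) q * ip (r1 q) g')"
    using attain[OF fin1 r1H' dat1 fH fn f_data G0, of "cost1 (grad mk \<theta>)"] by blast
  have g1H: "g1 \<in> H" unfolding g1 using sumH[OF fin1 r1H'] .
  have g1F: "g1 \<in> F" using Fdef g1H g1n g1d by blast
  have g1o': "grad g1 \<theta> \<bullet> grad mk \<theta> \<le> grad g \<theta> \<bullet> grad mk \<theta>" if "g \<in> F" for g
  proof -
    have gF: "g \<in> H" "ip g g \<le> \<Gamma>^2" "\<forall>i<Nk. \<bar>g (th i) - yt i\<bar> \<le> \<delta>" using that Fdef by auto
    then have "(\<Sum>q\<in>idx1_set Nk. cost1 (grad mk \<theta>) q * ip (r1 q) g1) \<le> (\<Sum>q\<in>idx1_set Nk. cost1 (grad mk \<theta>) q * ip (r1 q) g)"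
      using g1o by blast
    then show ?thesis using obj1[OF g1H] obj1[OF gF(1)] by simp
  qed
  have part1: "\<exists>v. (\<exists>\<beta>. socp1_feasible k th yt Nk \<delta> \<Gamma> \<theta> \<beta> \<and>
                linf (idx1_set Nk) (cost1 (grad mk \<theta>)) (Kfrak k th \<theta>) \<beta> = v) \<and>
          (\<forall>\<beta>. socp1_feasible k th yt Nk \<delta> \<Gamma> \<theta> \<beta> \<longrightarrow>
                v \<le> linf (idx1_set Nk) (cost1 (grad mk \<theta>)) (Kfrak k th \<theta>) \<beta>) \<and>
          (\<exists>g\<in>F. grad g \<theta> \<bullet> grad mk \<theta> = v) \<and>
          (\<forall>g\<in>F. v \<le> grad g \<theta> \<bullet> grad mk \<theta>) \<and>
          v \<le> grad f \<theta> \<bullet> grad mk \<theta>"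
  proof (intro exI[of _ "grad g1 \<theta> \<bullet> grad mk \<theta>"] conjI allI impI)
    show "\<exists>\<beta>. socp1_feasible k th yt Nk \<delta> \<Gamma> \<theta> \<beta> \<and>
        linf (idx1_set Nk) (cost1 (grad mk \<theta>)) (Kfrak k th \<theta>) \<beta> = grad g1 \<theta> \<bullet> grad mk \<theta>"
    proof (intro exI[of _ \<beta>1] conjI)
      show "socp1_feasible k th yt Nk \<delta> \<Gamma> \<theta> \<beta>1" using feas1[of \<beta>1] g1n g1d g1 by simp
      show "linf (idx1_set Nk) (cost1 (grad mk \<theta>)) (Kfrak k th \<theta>) \<beta>1 = grad g1 \<theta> \<bullet> grad mk \<theta>"
        using lin1[of \<beta>1] g1 by simp
    qed
    fix \<beta> assume "socp1_feasible k th yt Nk \<delta> \<Gamma> \<theta> \<beta>"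
    then have "(\<lambda>x. \<Sum>q\<in>idx1_set Nk. \<beta> q * r1 q x) \<in> F"
      using feas1 Fdef sumH[OF fin1 r1H'] by blast
    then show "grad g1 \<theta> \<bullet> grad mk \<theta> \<le> linf (idx1_set Nk) (cost1 (grad mk \<theta>)) (Kfrak k th \<theta>) \<beta>"
      using g1o' lin1 by simp
  next
    show "\<exists>g\<in>F. grad g \<theta> \<bullet> grad mk \<theta> = grad g1 \<theta> \<bullet> grad mk \<theta>" using g1F by blast
    show "\<forall>g\<in>F. grad g1 \<theta> \<bullet> grad mk \<theta> \<le> grad g \<theta> \<bullet> grad mk \<theta>" using g1o' by blast
    show "grad g1 \<theta> \<bullet> grad mk \<theta> \<le> grad f \<theta> \<bullet> grad mk \<theta>" using g1o' fF by blast
  qed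
  have part2: "\<forall>\<mu> c. \<mu> > 0 \<longrightarrow> 0 < c \<longrightarrow> c < 1 \<longrightarrow>
        (let \<theta>p = \<theta> - \<mu> *\<^sub>R grad mk \<theta> in
         \<exists>v. (\<exists>\<beta>. socp2_feasible k th yt Nk \<delta> \<Gamma> \<theta> \<theta>p \<beta> \<and>
                linf (idx2_set Nk) (cost2 c \<mu> (grad mk \<theta>)) (Kfrak2 k th \<theta> \<theta>p) \<beta> = v) \<and>
          (\<forall>\<beta>. socp2_feasible k th yt Nk \<delta> \<Gamma> \<theta> \<theta>p \<beta> \<longrightarrow>
                linf (idx2_set Nk) (cost2 c \<mu> (grad mk \<theta>)) (Kfrak2 k th \<theta> \<theta>p) \<beta> \<le> v) \<and>
          (\<exists>g\<in>F. g \<theta>p - g \<theta> + c * \<mu> * (grad g \<theta> \<bullet> grad mk \<theta>) = v) \<and>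
          (\<forall>g\<in>F. g \<theta>p - g \<theta> + c * \<mu> * (grad g \<theta> \<bullet> grad mk \<theta>) \<le> v) \<and>
          f \<theta>p - f \<theta> + c * \<mu> * (grad f \<theta> \<bullet> grad mk \<theta>) \<le> v)"
  proof (intro allI impI)
    fix \<mu> c :: real
    define \<theta>p where "\<theta>p = \<theta> - \<mu> *\<^sub>R grad mk \<theta>"
    define ob where "ob g = g \<theta>p - g \<theta> + c * \<mu> * (grad g \<theta> \<bullet> grad mk \<theta>)" for g
    define r2 where "r2 p = (case p of Dat2 i \<Rightarrow> (\<lambda>x. k x (th i)) | Th \<Rightarrow> (\<lambda>x. k x \<theta>)
       | ThP \<Rightarrow> (\<lambda>x. k x \<theta>p) | Gr2 l \<Rightarrow> (\<lambda>x. pd1 k l \<theta> x))" for p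
    have r2H: "r2 q \<in> H" for q by (cases q) (simp_all add: r2_def kH hH)
    have K2: "\<forall>p q. Kfrak2 k th \<theta> \<theta>p p q = ip (r2 p) (r2 q)"
    proof (intro allI)
      fix p q show "Kfrak2 k th \<theta> \<theta>p p q = ip (r2 p) (r2 q)"
        by (cases p; cases q) (simp_all add: Kfrak2_def r2_def ipkk ipkh iphk iphh ksym)
    qed
    have fin2: "finite (idx2_set Nk :: 'n idx2 set)" using sum_idx2 by blast
    have r2H': "\<forall>q\<in>idx2_set Nk. r2 q \<in> H" using r2H by blast
    have dat2: "\<forall>i<Nk. Dat2 i \<in> idx2_set Nk \<and> r2 (Dat2 i) = (\<lambda>x. k x (th i))"
      by (simp add: idx2_set_def r2_def)
    have obj2: "(\<Sum>p\<in>idx2_set Nk. cost2 c \<mu> (grad mk \<theta>) p * ip (r2 p) g) = ob g" if gH: "g \<in> H" for g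
    proof -
      have "(\<Sum>p\<in>idx2_set Nk. cost2 c \<mu> (grad mk \<theta>) p * ip (r2 p) g) =
        - ip (\<lambda>x. k x \<theta>) g + ip (\<lambda>x. k x \<theta>p) g + (\<Sum>l\<in>UNIV. c * \<mu> * grad mk \<theta> $ l * ip (\<lambda>x. pd1 k l \<theta> x) g)"
        using sum_idx2[of Nk "\<lambda>p. cost2 c \<mu> (grad mk \<theta>) p * ip (r2 p) g"] by (simp add: cost2_def r2_def)
      also have "(\<Sum>l\<in>UNIV. c * \<mu> * grad mk \<theta> $ l * ip (\<lambda>x. pd1 k l \<theta> x) g) = c * \<mu> * (grad g \<theta> \<bullet> grad mk \<theta>)"
        unfolding inner_vec_def sum_distrib_left using grad_ip[OF gH] by (intro sum.cong) (auto simp: mult_ac)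
      finally show ?thesis using kdat[OF gH] by (simp add: ob_def)
    qed
    have feas2: "socp2_feasible k th yt Nk \<delta> \<Gamma> \<theta> \<theta>p \<beta> \<longleftrightarrow>
       ip (\<lambda>x. \<Sum>q\<in>idx2_set Nk. \<beta> q * r2 q x) (\<lambda>x. \<Sum>q\<in>idx2_set Nk. \<beta> q * r2 q x) \<le> \<Gamma>^2 \<and>
       (\<forall>i<Nk. \<bar>(\<lambda>x. \<Sum>q\<in>idx2_set Nk. \<beta> q * r2 q x) (th i) - yt i\<bar> \<le> \<delta>)" for \<beta>
    proof -
      have m: "mrow (idx2_set Nk) (Kfrak2 k th \<theta> \<theta>p) (Dat2 i) \<beta> = (\<lambda>x. \<Sum>q\<in>idx2_set Nk. \<beta> q * r2 q x) (th i)" if "i < Nk" for i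
      proof -
        have d: "Dat2 i \<in> idx2_set Nk" "r2 (Dat2 i) = (\<lambda>x. k x (th i))" using dat2 that by auto
        have "mrow (idx2_set Nk) (Kfrak2 k th \<theta> \<theta>p) (Dat2 i) \<beta> = ip (r2 (Dat2 i)) (\<lambda>x. \<Sum>q\<in>idx2_set Nk. \<beta> q * r2 q x)"
          by (rule conv(2)[OF fin2 r2H' K2 d(1)])
        also have "\<dots> = (\<lambda>x. \<Sum>q\<in>idx2_set Nk. \<beta> q * r2 q x) (th i)"
          unfolding d(2) by (rule kdat[OF sumH[OF fin2 r2H']])
        finally show ?thesis .
      qed
      show ?thesis unfolding socp2_feasible_def conv(1)[OF fin2 r2H' K2] using m by auto
    qed
    have lin2: "linf (idx2_set Nk) (cost2 c \<mu> (grad mk \<theta>)) (Kfrak2 k th \<theta> \<theta>p) \<beta> =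
        ob (\<lambda>x. \<Sum>q\<in>idx2_set Nk. \<beta> q * r2 q x)" for \<beta>
      using conv(3)[OF fin2 r2H' K2] obj2[OF sumH[OF fin2 r2H']] by simp
    obtain \<beta>2 g2 where g2: "g2 = (\<lambda>x. \<Sum>q\<in>idx2_set Nk. \<beta>2 q * r2 q x)" and g2n: "ip g2 g2 \<le> \<Gamma>^2"
      and g2d: "\<forall>i<Nk. \<bar>g2 (th i) - yt i\<bar> \<le> \<delta>"
      and g2o: "\<forall>g'\<in>H. ip g' g' \<le> \<Gamma>^2 \<and> (\<forall>i<Nk. \<bar>g' (th i) - yt i\<bar> \<le> \<delta>) \<longrightarrow>
          (\<Sum>q\<in>idx2_set Nk. - cost2 c \<mu> (grad mk \<theta>) q * ip (r2 q) g2) \<le> (\<Sum>q\<in>idx2_set Nk. - cost2 c \<mu> (grad mk \<theta>) q * ip (r2 q) g')"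
      using attain[OF fin2 r2H' dat2 fH fn f_data G0, of "\<lambda>q. - cost2 c \<mu> (grad mk \<theta>) q"] by blast
    have g2H: "g2 \<in> H" unfolding g2 using sumH[OF fin2 r2H'] .
    have g2F: "g2 \<in> F" using Fdef g2H g2n g2d by blast
    have g2o': "ob g \<le> ob g2" if "g \<in> F" for g
    proof -
      have gF: "g \<in> H" "ip g g \<le> \<Gamma>^2" "\<forall>i<Nk. \<bar>g (th i) - yt i\<bar> \<le> \<delta>" using that Fdef by auto
      then have "(\<Sum>q\<in>idx2_set Nk. - cost2 c \<mu> (grad mk \<theta>) q * ip (r2 q) g2) \<le> (\<Sum>q\<in>idx2_set Nk. - cost2 c \<mu> (grad mk \<theta>) q * ip (r2 q) g)"
        using g2o by blast
      then show ?thesis using obj2[OF g2H] obj2[OF gF(1)] by (simp add: sum_negf)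
    qed
    have "\<exists>v. (\<exists>\<beta>. socp2_feasible k th yt Nk \<delta> \<Gamma> \<theta> \<theta>p \<beta> \<and>
                linf (idx2_set Nk) (cost2 c \<mu> (grad mk \<theta>)) (Kfrak2 k th \<theta> \<theta>p) \<beta> = v) \<and>
          (\<forall>\<beta>. socp2_feasible k th yt Nk \<delta> \<Gamma> \<theta> \<theta>p \<beta> \<longrightarrow>
                linf (idx2_set Nk) (cost2 c \<mu> (grad mk \<theta>)) (Kfrak2 k th \<theta> \<theta>p) \<beta> \<le> v) \<and>
          (\<exists>g\<in>F. ob g = v) \<and> (\<forall>g\<in>F. ob g \<le> v) \<and> ob f \<le> v"
    proof (intro exI[of _ "ob g2"] conjI allI impI)
      show "\<exists>\<beta>. socp2_feasible k th yt Nk \<delta> \<Gamma> \<theta> \<theta>p \<beta> \<and>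
          linf (idx2_set Nk) (cost2 c \<mu> (grad mk \<theta>)) (Kfrak2 k th \<theta> \<theta>p) \<beta> = ob g2"
      proof (intro exI[of _ \<beta>2] conjI)
        show "socp2_feasible k th yt Nk \<delta> \<Gamma> \<theta> \<theta>p \<beta>2" using feas2[of \<beta>2] g2n g2d g2 by simp
        show "linf (idx2_set Nk) (cost2 c \<mu> (grad mk \<theta>)) (Kfrak2 k th \<theta> \<theta>p) \<beta>2 = ob g2"
          using lin2[of \<beta>2] g2 by simp
      qed
      fix \<beta> assume "socp2_feasible k th yt Nk \<delta> \<Gamma> \<theta> \<theta>p \<beta>"
      then have "(\<lambda>x. \<Sum>q\<in>idx2_set Nk. \<beta> q * r2 q x) \<in> F"
        using feas2 Fdef sumH[OF fin2 r2H'] by blast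
      then show "linf (idx2_set Nk) (cost2 c \<mu> (grad mk \<theta>)) (Kfrak2 k th \<theta> \<theta>p) \<beta> \<le> ob g2"
        using g2o' lin2 by simp
    next
      show "\<exists>g\<in>F. ob g = ob g2" using g2F by blast
      show "\<forall>g\<in>F. ob g \<le> ob g2" using g2o' by blast
      show "ob f \<le> ob g2" using g2o' fF by blast
    qed
    then show "let \<theta>p = \<theta> - \<mu> *\<^sub>R grad mk \<theta> in
         \<exists>v. (\<exists>\<beta>. socp2_feasible k th yt Nk \<delta> \<Gamma> \<theta> \<theta>p \<beta> \<and>
                linf (idx2_set Nk) (cost2 c \<mu> (grad mk \<theta>)) (Kfrak2 k th \<theta> \<theta>p) \<beta> = v) \<and>
          (\<forall>\<beta>. socp2_feasible k th yt Nk \<delta> \<Gamma> \<theta> \<theta>p \<beta> \<longrightarrow>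
                linf (idx2_set Nk) (cost2 c \<mu> (grad mk \<theta>)) (Kfrak2 k th \<theta> \<theta>p) \<beta> \<le> v) \<and>
          (\<exists>g\<in>F. g \<theta>p - g \<theta> + c * \<mu> * (grad g \<theta> \<bullet> grad mk \<theta>) = v) \<and>
          (\<forall>g\<in>F. g \<theta>p - g \<theta> + c * \<mu> * (grad g \<theta> \<bullet> grad mk \<theta>) \<le> v) \<and>
          f \<theta>p - f \<theta> + c * \<mu> * (grad f \<theta> \<bullet> grad mk \<theta>) \<le> v"
      unfolding Let_def \<theta>p_def[symmetric] ob_def[symmetric] .
  qed
  show ?thesis using part1 part2 by blast
qed



end
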